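(* Let $(G,N,\theta)_{\mathcal H}\ge_c(H,M,\varphi)_{\mathcal H}$. Suppose that $L\trianglelefteq G$ is contained in $\ker\theta\cap\ker\varphi\cap\mathbf C_G(N)$ and that $\mathbf C_{G/L}(N/L)=\mathbf C_G(N)/L$. Then $(G/L,N/L,\theta)_{\mathcal H}\ge_c(H/L,M/L,\varphi)_{\mathcal H}$, where $\theta$ and $\varphi$ are regarded as characters of $N/L$ and $M/L$.
   Context: All groups are finite; $p$ is a fixed prime. $\mathbb Q^{\mathrm{ab}}\subseteq\mathbb C$ is generated by all roots of unity, $\mathcal G=\mathrm{Gal}(\mathbb Q^{\mathrm{ab}}/\mathbb Q)$, $\mathcal H\le\mathcal G$ consists of those $\sigma$ for which there is an integer $f$ with $\sigma(\xi)=\xi^{p^f}$ for all roots of unity $\xi$ of order prime to $p$. For $N\trianglelefteq G$, $\theta\in\mathrm{Irr}(N)$, $g\in G$, $\sigma\in\mathcal G$: $\theta^{g\sigma}(n)=\sigma(\theta(gng^{-1}))$; $A_\theta$ the stabilizer in $A\le G\times\mathcal G$; $\theta^{\mathcal H}$ the $\mathcal H$-orbit; $G_{\theta^{\mathcal H}}=\{g:\theta^g\in\theta^{\mathcal H}\}$. $(G,N,\theta)_{\mathcal H}$ is an $\mathcal H$-triple if $N\trianglelefteq G$, $\theta\in\mathrm{Irr}(N)$, $G_{\theta^{\mathcal H}}=G$. Projective representation $\mathcal P$ with factor set $\alpha$: $\mathcal P(x)\mathcal P(y)=\alpha(x,y)\mathcal P(xy)$. For $G$-invariant $\theta$, $\mathcal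 P$ is associated with $\theta$ if $\mathcal P_N$ affords $\theta$ and $\mathcal P(ng)=\mathcal P(n)\mathcal P(g)$, $\mathcal P(gn)=\mathcal P(g)\mathcal P(n)$. $\mathcal Q\sim\mu\mathcal P$ means $\mathcal Q(x)=\mu(x)M^{-1}\mathcal P(x)M$ for fixed invertible $M$. For $\mathcal P$ associated with $\theta$ on $G_\theta$ with entries in $\mathbb Q^{\mathrm{ab}}$ and $\theta^{x\sigma}=\theta$: $\mathcal P^{x\sigma}(y)=\sigma(\mathcal P(xyx^{-1}))$, and $\mu_{x\sigma}$ is the unique function $G_\theta\to\mathbb C^\times$, constant on $N$-cosets, $\mu_{x\sigma}(1)=1$, with $\mathcal P^{x\sigma}\sim\mu_{x\sigma}\mathcal P$. $(G,N,\theta)_{\mathcal H}\ge_c(H,M,\varphi)_{\mathcal H}$ (both $\mathcal H$-triples, $H\le G$) means: (i) $G=NH$, $N\cap H=M$, $\mathbf C_G(N)\subseteq H$; (ii) $(H\times\mathcal H)_\theta=(H\times\mathcal H)_\varphi$; (iii) there are projective representations $\mathcal P$ of $G_\theta$ associated with $\theta$ and $\mathcal P'$ of $H_\varphi$ associated with $\varphi$, entries in $\mathbb Q^{\mathrm{ab}}$, factor sets with root-of-unity values agreeing on $H_\theta\times H_\theta$, and $\mathcal P(c),\mathcal P'(c)$ the same scalar for all $c\in\mathbf C_G(N)$; (iv) $\mu_a=\mu'_a$ on $H_\theta$ for all $a\in(H\times\mathcal H)_\theta$. *)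

theory Defs
  imports "Jordan_Normal_Form.Matrix" "HOL-Algebra.Coset"
begin

definition root_of_unity :: "complex \<Rightarrow> bool" where
  "root_of_unity z \<longleftrightarrow> (\<exists>n::nat. n > 0 \<and> z ^ n = 1)"

definition Qab :: "complex set" where
  "Qab = \<Inter> {F. (\<forall>z. root_of_unity z \<longrightarrow> z \<in> F) \<and> 0 \<in> F \<and> 1 \<in> F \<and>
            (\<forall>x\<in>F. \<forall>y\<in>F. x + y \<in> F \<and> x * y \<in> F) \<and> (\<forall>x\<in>F. - x \<in> F) \<and>
            (\<forall>x\<in>F. x \<noteq> 0 \<longrightarrow> inverse x \<in> F)}"

text \<open>Elements of Gal(Q^ab/Q), represented as maps on C that are field automorphisms
  of Q^ab and the identity outside Q^ab.\<close>
definition GalQab :: "(complex \<Rightarrow> complex) set" where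
  "GalQab = {\<sigma>. bij_betw \<sigma> Qab Qab \<and>
      (\<forall>x\<in>Qab. \<forall>y\<in>Qab. \<sigma> (x + y) = \<sigma> x + \<sigma> y \<and> \<sigma> (x * y) = \<sigma> x * \<sigma> y) \<and>
      (\<forall>x. x \<notin> Qab \<longrightarrow> \<sigma> x = x)}"

text \<open>H: sigma acts on roots of unity of order prime to p as xi |-> xi^(p^f) for some integer f.
  For negative f, xi^(p^f) is the unique p^(-f)-th root of xi of order prime to p, so the
  condition sigma(xi) = xi^(p^f) is written as sigma(xi)^(p^(-f)) = xi.\<close>
definition HGal :: "nat \<Rightarrow> (complex \<Rightarrow> complex) set" where
  "HGal p = {\<sigma> \<in> GalQab. \<exists>f::int. \<forall>\<xi>::complex.
      (\<exists>n::nat. n > 0 \<and> coprime n p \<and> \<xi> ^ n = 1) \<longrightarrow>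
        (\<sigma> \<xi>) ^ (p ^ nat (- f)) = \<xi> ^ (p ^ nat f)}"

definition normal_in :: "('a, 'b) monoid_scheme \<Rightarrow> 'a set \<Rightarrow> 'a set \<Rightarrow> bool" where
  "normal_in G K N \<longleftrightarrow> subgroup N G \<and> N \<subseteq> K \<and>
     (\<forall>k\<in>K. \<forall>n\<in>N. k \<otimes>\<^bsub>G\<^esub> n \<otimes>\<^bsub>G\<^esub> inv\<^bsub>G\<^esub> k \<in> N)"

definition cent :: "('a, 'b) monoid_scheme \<Rightarrow> 'a set \<Rightarrow> 'a set \<Rightarrow> 'a set" where
  "cent G K N = {g \<in> K. \<forall>n\<in>N. g \<otimes>\<^bsub>G\<^esub> n = n \<otimes>\<^bsub>G\<^esub> g}"

definition mtrace :: "complex mat \<Rightarrow> complex" where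
  "mtrace A = (\<Sum>i<dim_row A. A $$ (i, i))"

definition is_rep :: "('a, 'b) monoid_scheme \<Rightarrow> 'a set \<Rightarrow> nat \<Rightarrow> ('a \<Rightarrow> complex mat) \<Rightarrow> bool" where
  "is_rep G K d X \<longleftrightarrow> (\<forall>k\<in>K. X k \<in> carrier_mat d d) \<and> X \<one>\<^bsub>G\<^esub> = 1\<^sub>m d \<and>
     (\<forall>x\<in>K. \<forall>y\<in>K. X (x \<otimes>\<^bsub>G\<^esub> y) = X x * X y)"

definition irr_rep :: "('a, 'b) monoid_scheme \<Rightarrow> 'a set \<Rightarrow> nat \<Rightarrow> ('a \<Rightarrow> complex mat) \<Rightarrow> bool" where
  "irr_rep G K d X \<longleftrightarrow> is_rep G K d X \<and> d > 0 \<and>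
     \<not> (\<exists>W. W \<subseteq> carrier_vec d \<and> 0\<^sub>v d \<in> W \<and> (\<forall>v\<in>W. \<forall>w\<in>W. v + w \<in> W) \<and>
           (\<forall>c. \<forall>v\<in>W. c \<cdot>\<^sub>v v \<in> W) \<and> W \<noteq> {0\<^sub>v d} \<and> W \<noteq> carrier_vec d \<and>
           (\<forall>k\<in>K. \<forall>w\<in>W. X k *\<^sub>v w \<in> W))"

definition irr_char :: "('a, 'b) monoid_scheme \<Rightarrow> 'a set \<Rightarrow> ('a \<Rightarrow> complex) \<Rightarrow> bool" where
  "irr_char G K \<chi> \<longleftrightarrow> (\<exists>d X. irr_rep G K d X \<and> (\<forall>k\<in>K. \<chi> k = mtrace (X k)))"

definition ker_char :: "('a, 'b) monoid_scheme \<Rightarrow> 'a set \<Rightarrow> ('a \<Rightarrow> complex) \<Rightarrow> 'a set" where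
  "ker_char G N \<theta> = {n \<in> N. \<theta> n = \<theta> \<one>\<^bsub>G\<^esub>}"

definition inertia :: "('a, 'b) monoid_scheme \<Rightarrow> 'a set \<Rightarrow> 'a set \<Rightarrow> ('a \<Rightarrow> complex) \<Rightarrow> 'a set" where
  "inertia G K N \<theta> = {g \<in> K. \<forall>n\<in>N. \<theta> (g \<otimes>\<^bsub>G\<^esub> n \<otimes>\<^bsub>G\<^esub> inv\<^bsub>G\<^esub> g) = \<theta> n}"

definition pstab :: "('a, 'b) monoid_scheme \<Rightarrow> nat \<Rightarrow> 'a set \<Rightarrow> 'a set \<Rightarrow> ('a \<Rightarrow> complex)
     \<Rightarrow> ('a \<times> (complex \<Rightarrow> complex)) set" where
  "pstab G p K N \<theta> = {(k, \<sigma>). k \<in> K \<and> \<sigma> \<in> HGal p \<and>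
      (\<forall>n\<in>N. \<sigma> (\<theta> (k \<otimes>\<^bsub>G\<^esub> n \<otimes>\<^bsub>G\<^esub> inv\<^bsub>G\<^esub> k)) = \<theta> n)}"

definition htriple :: "('a, 'b) monoid_scheme \<Rightarrow> nat \<Rightarrow> 'a set \<Rightarrow> 'a set \<Rightarrow> ('a \<Rightarrow> complex) \<Rightarrow> bool" where
  "htriple G p K N \<theta> \<longleftrightarrow> subgroup K G \<and> normal_in G K N \<and> irr_char G N \<theta> \<and>
     (\<forall>g\<in>K. \<exists>\<sigma>\<in>HGal p. \<forall>n\<in>N. \<theta> (g \<otimes>\<^bsub>G\<^esub> n \<otimes>\<^bsub>G\<^esub> inv\<^bsub>G\<^esub> g) = \<sigma> (\<theta> n))"

definition proj_rep :: "('a, 'b) monoid_scheme \<Rightarrow> 'a set \<Rightarrow> nat \<Rightarrow> ('a \<Rightarrow> complex mat)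
     \<Rightarrow> ('a \<Rightarrow> 'a \<Rightarrow> complex) \<Rightarrow> bool" where
  "proj_rep G K d P \<alpha> \<longleftrightarrow> (\<forall>x\<in>K. P x \<in> carrier_mat d d \<and> invertible_mat (P x)) \<and>
     (\<forall>x\<in>K. \<forall>y\<in>K. \<alpha> x y \<noteq> 0 \<and> P x * P y = \<alpha> x y \<cdot>\<^sub>m P (x \<otimes>\<^bsub>G\<^esub> y))"

definition assoc_proj :: "('a, 'b) monoid_scheme \<Rightarrow> 'a set \<Rightarrow> 'a set \<Rightarrow> ('a \<Rightarrow> complex) \<Rightarrow> nat
     \<Rightarrow> ('a \<Rightarrow> complex mat) \<Rightarrow> ('a \<Rightarrow> 'a \<Rightarrow> complex) \<Rightarrow> bool" where
  "assoc_proj G T N \<theta> d P \<alpha> \<longleftrightarrow> proj_rep G T d P \<alpha> \<and>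
     is_rep G N d P \<and> (\<forall>n\<in>N. \<theta> n = mtrace (P n)) \<and>
     (\<forall>n\<in>N. \<forall>g\<in>T. P (n \<otimes>\<^bsub>G\<^esub> g) = P n * P g \<and> P (g \<otimes>\<^bsub>G\<^esub> n) = P g * P n)"

definition is_mu :: "('a, 'b) monoid_scheme \<Rightarrow> 'a set \<Rightarrow> 'a set \<Rightarrow> ('a \<Rightarrow> complex)
     \<Rightarrow> ('a \<Rightarrow> complex mat) \<Rightarrow> 'a \<Rightarrow> (complex \<Rightarrow> complex) \<Rightarrow> ('a \<Rightarrow> complex) \<Rightarrow> bool" where
  "is_mu G K N \<theta> P x \<sigma> \<mu> \<longleftrightarrow>
     (let T = inertia G K N \<theta>; d = dim_row (P \<one>\<^bsub>G\<^esub>) in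
       (\<forall>y. y \<notin> T \<longrightarrow> \<mu> y = 0) \<and> (\<forall>y\<in>T. \<mu> y \<noteq> 0) \<and>
       (\<forall>y\<in>T. \<forall>n\<in>N. \<mu> (n \<otimes>\<^bsub>G\<^esub> y) = \<mu> y) \<and> \<mu> \<one>\<^bsub>G\<^esub> = 1 \<and>
       (\<exists>M Mi. M \<in> carrier_mat d d \<and> Mi \<in> carrier_mat d d \<and> inverts_mat M Mi \<and> inverts_mat Mi M \<and>
          (\<forall>y\<in>T. map_mat \<sigma> (P (x \<otimes>\<^bsub>G\<^esub> y \<otimes>\<^bsub>G\<^esub> inv\<^bsub>G\<^esub> x)) = \<mu> y \<cdot>\<^sub>m (Mi * P y * M))))"

definition mu :: "('a, 'b) monoid_scheme \<Rightarrow> 'a set \<Rightarrow> 'a set \<Rightarrow> ('a \<Rightarrow> complex)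
     \<Rightarrow> ('a \<Rightarrow> complex mat) \<Rightarrow> 'a \<Rightarrow> (complex \<Rightarrow> complex) \<Rightarrow> ('a \<Rightarrow> complex)" where
  "mu G K N \<theta> P x \<sigma> = (THE \<mu>. is_mu G K N \<theta> P x \<sigma> \<mu>)"

definition ge_c :: "('a, 'b) monoid_scheme \<Rightarrow> nat \<Rightarrow> 'a set \<Rightarrow> ('a \<Rightarrow> complex)
     \<Rightarrow> 'a set \<Rightarrow> 'a set \<Rightarrow> ('a \<Rightarrow> complex) \<Rightarrow> bool" where
  "ge_c G p N \<theta> H M \<phi> \<longleftrightarrow>
     htriple G p (carrier G) N \<theta> \<and> htriple G p H M \<phi> \<and>
     \<comment> \<open>(i)\<close>
     carrier G = N <#>\<^bsub>G\<^esub> H \<and> N \<inter> H = M \<and> cent G (carrier G) N \<subseteq> H \<and>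
     \<comment> \<open>(ii)\<close>
     pstab G p H N \<theta> = pstab G p H M \<phi> \<and>
     \<comment> \<open>(iii) and (iv)\<close>
     (\<exists>d P \<alpha> d' P' \<alpha>'.
        assoc_proj G (inertia G (carrier G) N \<theta>) N \<theta> d P \<alpha> \<and>
        assoc_proj G (inertia G H M \<phi>) M \<phi> d' P' \<alpha>' \<and>
        (\<forall>x\<in>inertia G (carrier G) N \<theta>. elements_mat (P x) \<subseteq> Qab) \<and>
        (\<forall>x\<in>inertia G H M \<phi>. elements_mat (P' x) \<subseteq> Qab) \<and>
        (\<forall>x\<in>inertia G (carrier G) N \<theta>. \<forall>y\<in>inertia G (carrier G) N \<theta>. root_of_unity (\<alpha> x y)) \<and>
        (\<forall>x\<in>inertia G H M \<phi>. \<forall>y\<in>inertia G H M \<phi>. root_of_unity (\<alpha>' x y)) \<and>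
        (\<forall>x\<in>inertia G H N \<theta>. \<forall>y\<in>inertia G H N \<theta>. \<alpha> x y = \<alpha>' x y) \<and>
        (\<forall>c\<in>cent G (carrier G) N. \<exists>s. P c = s \<cdot>\<^sub>m 1\<^sub>m d \<and> P' c = s \<cdot>\<^sub>m 1\<^sub>m d') \<and>
        (\<forall>h \<sigma>. (h, \<sigma>) \<in> pstab G p H N \<theta> \<longrightarrow>
           (\<forall>y\<in>inertia G H N \<theta>. mu G (carrier G) N \<theta> P h \<sigma> y = mu G H M \<phi> P' h \<sigma> y)))"

definition qimg :: "('a, 'b) monoid_scheme \<Rightarrow> 'a set \<Rightarrow> 'a set \<Rightarrow> 'a set set" where
  "qimg G L S = (\<lambda>s. L #>\<^bsub>G\<^esub> s) ` S"

text \<open>A function constant on L-cosets regarded as a function on cosets.\<close>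
definition qfun :: "('a \<Rightarrow> complex) \<Rightarrow> 'a set \<Rightarrow> complex" where
  "qfun \<theta> X = \<theta> (SOME x. x \<in> X)"

end

theory Submission
  imports Defs "Jordan_Normal_Form.Spectral_Radius"
begin

lemma sqmat_mult[simp]: "A \<in> carrier_mat n n \<Longrightarrow> B \<in> carrier_mat n n \<Longrightarrow> A * B \<in> carrier_mat n n"
  by simp

lemma mat_eq_by_vec:
  fixes A B :: "'c::semiring_1 mat"
  assumes A: "A \<in> carrier_mat n m" and B: "B \<in> carrier_mat n m"
    and eq: "\<And>v. v \<in> carrier_vec m \<Longrightarrow> A *\<^sub>v v = B *\<^sub>v v"
  shows "A = B"
proof (rule eq_matI)
  fix i j assume i: "i < dim_row B" and j: "j < dim_col B"
  have "(A *\<^sub>v unit_vec m j) $ i = (B *\<^sub>v unit_vec m j) $ i" using eq[of "unit_vec m j"] by simp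
  then show "A $$ (i,j) = B $$ (i,j)" using A B i j by simp
qed (use A B in auto)

lemma mtrace_one[simp]: "mtrace (1\<^sub>m d) = of_nat d"
  unfolding mtrace_def by simp

lemma mtrace_smult: "A \<in> carrier_mat n n \<Longrightarrow> mtrace (c \<cdot>\<^sub>m A) = c * mtrace A"
  unfolding mtrace_def by (simp add: sum_distrib_left)

lemma smult_one_mult_vec: "(v :: complex vec) \<in> carrier_vec d \<Longrightarrow> (c \<cdot>\<^sub>m 1\<^sub>m d) *\<^sub>v v = c \<cdot>\<^sub>v v"
proof (rule eq_vecI)
  fix i assume v: "v \<in> carrier_vec d" and i: "i < dim_vec (c \<cdot>\<^sub>v v)"
  have "((c \<cdot>\<^sub>m 1\<^sub>m d) *\<^sub>v v) $ i = (\<Sum>j\<in>{0..<d}. c * (if j = i then 1 else 0) * v $ j)"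
    using v i by (simp add: scalar_prod_def)
  also have "\<dots> = (\<Sum>j\<in>{0..<d}. (if j = i then c * v $ j else 0))"
    by (rule sum.cong) auto
  also have "\<dots> = c * v $ i" using i v by (simp add: sum.delta)
  finally show "((c \<cdot>\<^sub>m 1\<^sub>m d) *\<^sub>v v) $ i = (c \<cdot>\<^sub>v v) $ i" using i by simp
qed simp

lemma mtrace_comm:
  assumes A: "A \<in> carrier_mat n m" and B: "B \<in> carrier_mat m n"
  shows "mtrace (A * B) = mtrace (B * A)"
proof -
  have "mtrace (A * B) = (\<Sum>i<n. \<Sum>k<m. A $$ (i,k) * B $$ (k,i))"
    unfolding mtrace_def using A B by (auto simp: scalar_prod_def atLeast0LessThan intro!: sum.cong)
  also have "\<dots> = (\<Sum>k<m. \<Sum>i<n. B $$ (k,i) * A $$ (i,k))"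
    by (subst sum.swap) (simp add: mult.commute)
  also have "\<dots> = mtrace (B * A)"
    unfolding mtrace_def using A B by (auto simp: scalar_prod_def atLeast0LessThan intro!: sum.cong)
  finally show ?thesis .
qed

lemma is_rep_inv:
  assumes "group G" "subgroup N G" "is_rep G N d X" "n \<in> N"
  shows "X n * X (inv\<^bsub>G\<^esub> n) = 1\<^sub>m d" "X (inv\<^bsub>G\<^esub> n) * X n = 1\<^sub>m d"
proof -
  have ni: "inv\<^bsub>G\<^esub> n \<in> N" using subgroup.m_inv_closed[OF assms(2) assms(4)] .
  have nc: "n \<in> carrier G" using subgroup.subset[OF assms(2)] assms(4) by blast
  show "X n * X (inv\<^bsub>G\<^esub> n) = 1\<^sub>m d" using assms(3) ni assms(4) nc unfolding is_rep_def
    by (metis group.r_inv[OF assms(1)])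
  show "X (inv\<^bsub>G\<^esub> n) * X n = 1\<^sub>m d" using assms(3) ni assms(4) nc unfolding is_rep_def
    by (metis group.l_inv[OF assms(1)])
qed

lemma schur_scalar:
  assumes irr: "irr_rep G N d X" and C: "C \<in> carrier_mat d d"
    and comm: "\<And>n. n \<in> N \<Longrightarrow> C * X n = X n * C"
  shows "\<exists>c. C = c \<cdot>\<^sub>m 1\<^sub>m d"
proof -
  have d: "d > 0" and rep: "is_rep G N d X" using irr unfolding irr_rep_def by auto
  have Xc: "\<And>n. n \<in> N \<Longrightarrow> X n \<in> carrier_mat d d" using rep unfolding is_rep_def by auto
  obtain ev where "ev \<in> spectrum C" using spectrum_non_empty[OF C d] by auto
  then obtain v0 where ev: "eigenvector C v0 ev" unfolding spectrum_def eigenvalue_def by auto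
  have v0: "v0 \<in> carrier_vec d" "v0 \<noteq> 0\<^sub>v d" "C *\<^sub>v v0 = ev \<cdot>\<^sub>v v0"
    using ev C unfolding eigenvector_def by auto
  define W where "W = {v \<in> carrier_vec d. C *\<^sub>v v = ev \<cdot>\<^sub>v v}"
  have W1: "W \<subseteq> carrier_vec d" unfolding W_def by auto
  have W2: "0\<^sub>v d \<in> W" unfolding W_def using C by auto
  have W3: "\<forall>v\<in>W. \<forall>w\<in>W. v + w \<in> W"
    unfolding W_def using C by (auto simp: mult_add_distrib_mat_vec smult_add_distrib_vec)
  have W4: "\<forall>c. \<forall>v\<in>W. c \<cdot>\<^sub>v v \<in> W"
    unfolding W_def using C by (auto simp: mult_mat_vec smult_smult_assoc mult.commute)
  have W5: "\<forall>k\<in>N. \<forall>w\<in>W. X k *\<^sub>v w \<in> W"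
  proof (intro ballI)
    fix k w assume k: "k \<in> N" and w: "w \<in> W"
    have wc: "w \<in> carrier_vec d" and Cw: "C *\<^sub>v w = ev \<cdot>\<^sub>v w" using w unfolding W_def by auto
    have "C *\<^sub>v (X k *\<^sub>v w) = (C * X k) *\<^sub>v w" using C Xc[OF k] wc by simp
    also have "\<dots> = (X k * C) *\<^sub>v w" using comm[OF k] by simp
    also have "\<dots> = X k *\<^sub>v (ev \<cdot>\<^sub>v w)" using C Xc[OF k] wc Cw by simp
    also have "\<dots> = ev \<cdot>\<^sub>v (X k *\<^sub>v w)" using Xc[OF k] wc by (simp add: mult_mat_vec)
    finally show "X k *\<^sub>v w \<in> W" unfolding W_def using Xc[OF k] wc by auto
  qed
  have W6: "W \<noteq> {0\<^sub>v d}" using v0 unfolding W_def by auto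
  have "W = carrier_vec d" using irr W1 W2 W3 W4 W5 W6 unfolding irr_rep_def by blast
  then have all: "\<And>v. v \<in> carrier_vec d \<Longrightarrow> C *\<^sub>v v = (ev \<cdot>\<^sub>m 1\<^sub>m d) *\<^sub>v v"
    unfolding W_def by (auto simp: smult_one_mult_vec)
  show ?thesis using mat_eq_by_vec[OF C _ all] by auto
qed

definition msum :: "nat \<Rightarrow> ('x \<Rightarrow> complex mat) \<Rightarrow> 'x set \<Rightarrow> complex mat" where
  "msum d f S = mat d d (\<lambda>(i,j). \<Sum>x\<in>S. f x $$ (i,j))"

lemma msum_carrier[simp]: "msum d f S \<in> carrier_mat d d"
  unfolding msum_def by simp

lemma msum_dims[simp]: "dim_row (msum d f S) = d" "dim_col (msum d f S) = d"
  unfolding msum_def by simp_all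

lemma index_msum[simp]: "i < d \<Longrightarrow> j < d \<Longrightarrow> msum d f S $$ (i,j) = (\<Sum>x\<in>S. f x $$ (i,j))"
  unfolding msum_def by simp

lemma msum_mult_right:
  assumes f: "\<And>x. x \<in> S \<Longrightarrow> f x \<in> carrier_mat d d" and C: "C \<in> carrier_mat d d"
  shows "msum d f S * C = msum d (\<lambda>x. f x * C) S"
proof (rule eq_matI)
  fix i j assume i: "i < dim_row (msum d (\<lambda>x. f x * C) S)" and j: "j < dim_col (msum d (\<lambda>x. f x * C) S)"
  then have i: "i < d" and j: "j < d" by simp_all
  have "(msum d f S * C) $$ (i,j) = (\<Sum>k\<in>{0..<d}. \<Sum>x\<in>S. f x $$ (i,k) * C $$ (k,j))"
    using i j C by (simp add: scalar_prod_def sum_distrib_right)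
  also have "\<dots> = (\<Sum>x\<in>S. \<Sum>k\<in>{0..<d}. f x $$ (i,k) * C $$ (k,j))" by (rule sum.swap)
  also have "\<dots> = (\<Sum>x\<in>S. (f x * C) $$ (i,j))"
  proof (rule sum.cong)
    fix x assume x: "x \<in> S"
    show "(\<Sum>k\<in>{0..<d}. f x $$ (i,k) * C $$ (k,j)) = (f x * C) $$ (i,j)"
      using f[OF x] C i j by (simp add: scalar_prod_def)
  qed simp
  finally show "(msum d f S * C) $$ (i,j) = msum d (\<lambda>x. f x * C) S $$ (i,j)" using i j by simp
qed (use C in auto)

lemma msum_mult_left:
  assumes f: "\<And>x. x \<in> S \<Longrightarrow> f x \<in> carrier_mat d d" and C: "C \<in> carrier_mat d d"
  shows "C * msum d f S = msum d (\<lambda>x. C * f x) S"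
proof (rule eq_matI)
  fix i j assume i: "i < dim_row (msum d (\<lambda>x. C * f x) S)" and j: "j < dim_col (msum d (\<lambda>x. C * f x) S)"
  then have i: "i < d" and j: "j < d" by simp_all
  have "(C * msum d f S) $$ (i,j) = (\<Sum>k\<in>{0..<d}. \<Sum>x\<in>S. C $$ (i,k) * f x $$ (k,j))"
    using i j C by (simp add: scalar_prod_def sum_distrib_left)
  also have "\<dots> = (\<Sum>x\<in>S. \<Sum>k\<in>{0..<d}. C $$ (i,k) * f x $$ (k,j))" by (rule sum.swap)
  also have "\<dots> = (\<Sum>x\<in>S. (C * f x) $$ (i,j))"
  proof (rule sum.cong)
    fix x assume x: "x \<in> S"
    show "(\<Sum>k\<in>{0..<d}. C $$ (i,k) * f x $$ (k,j)) = (C * f x) $$ (i,j)"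
      using f[OF x] C i j by (simp add: scalar_prod_def)
  qed simp
  finally show "(C * msum d f S) $$ (i,j) = msum d (\<lambda>x. C * f x) S $$ (i,j)" using i j by simp
qed (use C in auto)

lemma msum_cong: "(\<And>x. x \<in> S \<Longrightarrow> f x = g x) \<Longrightarrow> msum d f S = msum d g S"
  unfolding msum_def by (auto intro!: cong_mat sum.cong)

lemma msum_reindex:
  assumes "bij_betw h S S"
  shows "msum d (\<lambda>x. f (h x)) S = msum d f S"
proof -
  have "\<And>i j. (\<Sum>x\<in>S. f (h x) $$ (i,j)) = (\<Sum>x\<in>S. f x $$ (i,j))"
    using sum.reindex_bij_betw[OF assms, of "\<lambda>x. f x $$ (_,_)"] by blast
  then show ?thesis unfolding msum_def by simp
qed

lemma avg_intertwine:
  assumes G: "group G" and N: "subgroup N G" and Y: "is_rep G N d Y" and X: "is_rep G N d X"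
    and A: "A \<in> carrier_mat d d" and m: "m \<in> N"
  shows "msum d (\<lambda>n. Y n * A * X (inv\<^bsub>G\<^esub> n)) N * X m = Y m * msum d (\<lambda>n. Y n * A * X (inv\<^bsub>G\<^esub> n)) N"
proof -
  interpret group G by fact
  have Nc: "\<And>x. x \<in> N \<Longrightarrow> x \<in> carrier G" using subgroup.subset[OF N] by blast
  have Ni: "\<And>x. x \<in> N \<Longrightarrow> inv\<^bsub>G\<^esub> x \<in> N" using subgroup.m_inv_closed[OF N] by blast
  have Nm: "\<And>x y. x \<in> N \<Longrightarrow> y \<in> N \<Longrightarrow> x \<otimes>\<^bsub>G\<^esub> y \<in> N" using subgroup.m_closed[OF N] by blast
  have Yc: "\<And>x. x \<in> N \<Longrightarrow> Y x \<in> carrier_mat d d" using Y unfolding is_rep_def by auto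
  have Xc: "\<And>x. x \<in> N \<Longrightarrow> X x \<in> carrier_mat d d" using X unfolding is_rep_def by auto
  have Ym: "\<And>x y. x \<in> N \<Longrightarrow> y \<in> N \<Longrightarrow> Y (x \<otimes>\<^bsub>G\<^esub> y) = Y x * Y y" using Y unfolding is_rep_def by auto
  have Xm: "\<And>x y. x \<in> N \<Longrightarrow> y \<in> N \<Longrightarrow> X (x \<otimes>\<^bsub>G\<^esub> y) = X x * X y" using X unfolding is_rep_def by auto
  let ?f = "\<lambda>n. Y n * A * X (inv\<^bsub>G\<^esub> n)"
  let ?g = "\<lambda>n. Y n * A * X (inv\<^bsub>G\<^esub> n \<otimes>\<^bsub>G\<^esub> m)"
  have fc: "\<And>n. n \<in> N \<Longrightarrow> ?f n \<in> carrier_mat d d" using Yc Xc Ni A by (meson mult_carrier_mat)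
  have "msum d ?f N * X m = msum d (\<lambda>n. ?f n * X m) N"
    by (rule msum_mult_right[OF fc Xc[OF m]])
  also have "\<dots> = msum d ?g N"
  proof (rule msum_cong)
    fix n assume n: "n \<in> N"
    show "?f n * X m = ?g n"
      using Yc[OF n] A Xc[OF Ni[OF n]] Xc[OF m] Xm[OF Ni[OF n] m] by (simp add: assoc_mult_mat[of _ d d _ d _ d])
  qed
  also have "\<dots> = msum d (\<lambda>n. ?g (m \<otimes>\<^bsub>G\<^esub> n)) N"
  proof (rule msum_reindex[symmetric])
    show "bij_betw (\<lambda>n. m \<otimes>\<^bsub>G\<^esub> n) N N"
    proof (rule bij_betw_byWitness[where f' = "\<lambda>n. inv\<^bsub>G\<^esub> m \<otimes>\<^bsub>G\<^esub> n"])
      show "\<forall>a\<in>N. inv\<^bsub>G\<^esub> m \<otimes>\<^bsub>G\<^esub> (m \<otimes>\<^bsub>G\<^esub> a) = a"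
        using Nc m by (metis inv_solve_left' m_closed)
      show "\<forall>a\<in>N. m \<otimes>\<^bsub>G\<^esub> (inv\<^bsub>G\<^esub> m \<otimes>\<^bsub>G\<^esub> a) = a"
        using Nc m by (metis inv_closed inv_inv inv_solve_left' m_closed)
      show "(\<lambda>n. m \<otimes>\<^bsub>G\<^esub> n) ` N \<subseteq> N" using Nm m by auto
      show "(\<lambda>n. inv\<^bsub>G\<^esub> m \<otimes>\<^bsub>G\<^esub> n) ` N \<subseteq> N" using Ni Nm m by auto
    qed
  qed
  also have "\<dots> = msum d (\<lambda>n. Y m * ?f n) N"
  proof (rule msum_cong)
    fix n assume n: "n \<in> N"
    have "inv\<^bsub>G\<^esub> (m \<otimes>\<^bsub>G\<^esub> n) \<otimes>\<^bsub>G\<^esub> m = inv\<^bsub>G\<^esub> n"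
      using Nc[OF n] Nc[OF m] by (simp add: inv_mult_group m_assoc)
    then have "?g (m \<otimes>\<^bsub>G\<^esub> n) = Y (m \<otimes>\<^bsub>G\<^esub> n) * A * X (inv\<^bsub>G\<^esub> n)" by simp
    also have "\<dots> = Y m * ?f n"
      using Ym[OF m n] Yc[OF m] Yc[OF n] A Xc[OF Ni[OF n]] by (simp add: assoc_mult_mat[of _ d d _ d _ d])
    finally show "?g (m \<otimes>\<^bsub>G\<^esub> n) = Y m * ?f n" .
  qed
  also have "\<dots> = Y m * msum d ?f N"
    by (rule msum_mult_left[OF fc Yc[OF m], symmetric])
  finally show ?thesis .
qed

lemma zero_mult_vec: "v \<in> carrier_vec m \<Longrightarrow> 0\<^sub>m n m *\<^sub>v v = 0\<^sub>v n"
  by (intro eq_vecI) auto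

lemma intertwine_invertible:
  assumes irr: "irr_rep G N d X" and Yc: "\<And>n. n \<in> N \<Longrightarrow> Y n \<in> carrier_mat d d"
    and T: "T \<in> carrier_mat d d" and int: "\<And>n. n \<in> N \<Longrightarrow> T * X n = Y n * T"
    and nz: "T \<noteq> 0\<^sub>m d d"
  shows "\<exists>Ti. Ti \<in> carrier_mat d d \<and> T * Ti = 1\<^sub>m d \<and> Ti * T = 1\<^sub>m d"
proof -
  have d: "d > 0" and rep: "is_rep G N d X" using irr unfolding irr_rep_def by auto
  have Xc: "\<And>n. n \<in> N \<Longrightarrow> X n \<in> carrier_mat d d" using rep unfolding is_rep_def by auto
  define W where "W = {v \<in> carrier_vec d. T *\<^sub>v v = 0\<^sub>v d}"
  have W1: "W \<subseteq> carrier_vec d" unfolding W_def by auto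
  have W2: "0\<^sub>v d \<in> W" unfolding W_def using T by auto
  have W3: "\<forall>v\<in>W. \<forall>w\<in>W. v + w \<in> W"
    unfolding W_def using T by (auto simp: mult_add_distrib_mat_vec)
  have W4: "\<forall>c. \<forall>v\<in>W. c \<cdot>\<^sub>v v \<in> W"
    unfolding W_def using T by (auto simp: mult_mat_vec)
  have W5: "\<forall>k\<in>N. \<forall>w\<in>W. X k *\<^sub>v w \<in> W"
  proof (intro ballI)
    fix k w assume k: "k \<in> N" and w: "w \<in> W"
    have wc: "w \<in> carrier_vec d" and Tw: "T *\<^sub>v w = 0\<^sub>v d" using w unfolding W_def by auto
    have "T *\<^sub>v (X k *\<^sub>v w) = (T * X k) *\<^sub>v w" using T Xc[OF k] wc by simp
    also have "\<dots> = (Y k * T) *\<^sub>v w" using int[OF k] by simp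
    also have "\<dots> = Y k *\<^sub>v (T *\<^sub>v w)" using T Yc[OF k] wc by simp
    also have "\<dots> = 0\<^sub>v d" using Yc[OF k] Tw by (auto intro!: eq_vecI)
    finally show "X k *\<^sub>v w \<in> W" unfolding W_def using Xc[OF k] wc by auto
  qed
  have W6: "W \<noteq> carrier_vec d"
  proof
    assume "W = carrier_vec d"
    then have "\<And>v. v \<in> carrier_vec d \<Longrightarrow> T *\<^sub>v v = 0\<^sub>m d d *\<^sub>v v" unfolding W_def
      by (auto simp: zero_mult_vec)
    then have "T = 0\<^sub>m d d" using mat_eq_by_vec[OF T] by auto
    with nz show False by simp
  qed
  have "W = {0\<^sub>v d}" using irr W1 W2 W3 W4 W5 W6 unfolding irr_rep_def by blast
  then have "\<not> (\<exists>v. v \<in> carrier_vec d \<and> v \<noteq> 0\<^sub>v d \<and> T *\<^sub>v v = 0\<^sub>v d)" unfolding W_def by auto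
  then have "det T \<noteq> 0" using det_0_iff_vec_prod_zero_field[OF T] by auto
  from det_non_zero_imp_unit[OF T this, of "()"]
  obtain Ti where "Ti \<in> carrier_mat d d" "Ti * T = 1\<^sub>m d" "T * Ti = 1\<^sub>m d"
    unfolding Units_def ring_mat_def by auto
  then show ?thesis by auto
qed

definition Emat :: "nat \<Rightarrow> nat \<Rightarrow> nat \<Rightarrow> complex mat" where
  "Emat d i j = mat d d (\<lambda>(a,b). if a = i \<and> b = j then 1 else 0)"

lemma Emat_carrier[simp]: "Emat d i j \<in> carrier_mat d d"
  unfolding Emat_def by simp

lemma Emat_dims[simp]: "dim_row (Emat d i j) = d" "dim_col (Emat d i j) = d"
  unfolding Emat_def by simp_all

lemma BE_entry:
  assumes B: "B \<in> carrier_mat d d" and i: "i < d" and j: "j < d" and a: "a < d" and b: "b < d"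
  shows "(B * Emat d i j) $$ (a,b) = (if b = j then B $$ (a,i) else 0)"
proof -
  have "(B * Emat d i j) $$ (a,b) = (\<Sum>k\<in>{0..<d}. B $$ (a,k) * (if k = i \<and> b = j then 1 else 0))"
    using B a b by (simp add: scalar_prod_def Emat_def)
  also have "\<dots> = (\<Sum>k\<in>{0..<d}. if k = i then (if b = j then B $$ (a,k) else 0) else 0)"
    by (rule sum.cong) auto
  also have "\<dots> = (if b = j then B $$ (a,i) else 0)" using i by (simp add: sum.delta)
  finally show ?thesis .
qed

lemma BEC_entry:
  assumes B: "B \<in> carrier_mat d d" and C: "C \<in> carrier_mat d d" and i: "i < d" and j: "j < d"
    and a: "a < d" and b: "b < d"
  shows "(B * Emat d i j * C) $$ (a,b) = B $$ (a,i) * C $$ (j,b)"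
proof -
  have "(B * Emat d i j * C) $$ (a,b) = (\<Sum>k\<in>{0..<d}. (B * Emat d i j) $$ (a,k) * C $$ (k,b))"
    using B C a b by (auto simp: scalar_prod_def intro!: sum.cong)
  also have "\<dots> = (\<Sum>k\<in>{0..<d}. if k = j then B $$ (a,i) * C $$ (k,b) else 0)"
    by (rule sum.cong) (use BE_entry[OF B i j a] in auto)
  also have "\<dots> = B $$ (a,i) * C $$ (j,b)" using j by (simp add: sum.delta)
  finally show ?thesis .
qed

lemma mtrace_Emat: "i < d \<Longrightarrow> j < d \<Longrightarrow> mtrace (Emat d i j) = (if i = j then 1 else 0)"
  unfolding mtrace_def Emat_def by (simp add: sum.delta)

lemma mtrace_msum:
  assumes "\<And>x. x \<in> S \<Longrightarrow> f x \<in> carrier_mat d d"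
  shows "mtrace (msum d f S) = (\<Sum>x\<in>S. mtrace (f x))"
proof -
  have "mtrace (msum d f S) = (\<Sum>i<d. \<Sum>x\<in>S. f x $$ (i,i))" unfolding mtrace_def by simp
  also have "\<dots> = (\<Sum>x\<in>S. \<Sum>i<d. f x $$ (i,i))" by (rule sum.swap)
  also have "\<dots> = (\<Sum>x\<in>S. mtrace (f x))" unfolding mtrace_def using assms by (auto intro!: sum.cong)
  finally show ?thesis .
qed

lemma pairing_formula:
  assumes Yc: "\<And>n. n \<in> N \<Longrightarrow> Y n \<in> carrier_mat d d" and Xc: "\<And>n. n \<in> N \<Longrightarrow> X (iv n) \<in> carrier_mat d d"
  shows "(\<Sum>i<d. \<Sum>j<d. msum d (\<lambda>n. Y n * Emat d i j * X (iv n)) N $$ (i,j))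
       = (\<Sum>n\<in>N. mtrace (Y n) * mtrace (X (iv n)))"
proof -
  have "(\<Sum>i<d. \<Sum>j<d. msum d (\<lambda>n. Y n * Emat d i j * X (iv n)) N $$ (i,j))
      = (\<Sum>i<d. \<Sum>j<d. \<Sum>n\<in>N. Y n $$ (i,i) * X (iv n) $$ (j,j))"
  proof -
    have e: "\<And>i j n. i < d \<Longrightarrow> j < d \<Longrightarrow> n \<in> N \<Longrightarrow>
       (Y n * Emat d i j * X (iv n)) $$ (i,j) = Y n $$ (i,i) * X (iv n) $$ (j,j)"
      using BEC_entry Yc Xc by blast
    show ?thesis by (rule sum.cong[OF refl], rule sum.cong[OF refl]) (simp add: e)
  qed
  also have "\<dots> = (\<Sum>n\<in>N. \<Sum>i<d. \<Sum>j<d. Y n $$ (i,i) * X (iv n) $$ (j,j))"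
  proof -
    have "(\<Sum>i<d. \<Sum>j<d. \<Sum>n\<in>N. Y n $$ (i,i) * X (iv n) $$ (j,j))
        = (\<Sum>i<d. \<Sum>n\<in>N. \<Sum>j<d. Y n $$ (i,i) * X (iv n) $$ (j,j))"
      by (rule sum.cong[OF refl], rule sum.swap)
    also have "\<dots> = (\<Sum>n\<in>N. \<Sum>i<d. \<Sum>j<d. Y n $$ (i,i) * X (iv n) $$ (j,j))"
      by (rule sum.swap)
    finally show ?thesis .
  qed
  also have "\<dots> = (\<Sum>n\<in>N. mtrace (Y n) * mtrace (X (iv n)))"
    unfolding mtrace_def using Yc Xc by (auto simp: sum_product intro!: sum.cong)
  finally show ?thesis .
qed



lemma char_norm:
  assumes G: "group G" and N: "subgroup N G" and irr: "irr_rep G N d X"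
  shows "(\<Sum>n\<in>N. mtrace (X n) * mtrace (X (inv\<^bsub>G\<^esub> n))) = of_nat (card N)"
proof -
  have d: "d > 0" and rep: "is_rep G N d X" using irr unfolding irr_rep_def by auto
  have Xc: "\<And>n. n \<in> N \<Longrightarrow> X n \<in> carrier_mat d d" using rep unfolding is_rep_def by auto
  have Ni: "\<And>x. x \<in> N \<Longrightarrow> inv\<^bsub>G\<^esub> x \<in> N" using subgroup.m_inv_closed[OF N] by blast
  define S where "S i j = msum d (\<lambda>n. X n * Emat d i j * X (inv\<^bsub>G\<^esub> n)) N" for i j
  have Sij: "S i j $$ (i,j) = (if i = j then of_nat (card N) / of_nat d else 0)" if i: "i < d" and j: "j < d" for i j
  proof -
    have "\<exists>c. S i j = c \<cdot>\<^sub>m 1\<^sub>m d"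
      by (rule schur_scalar[OF irr]) (auto simp: S_def intro: avg_intertwine[OF G N rep rep])
    then obtain c where c: "S i j = c \<cdot>\<^sub>m 1\<^sub>m d" by auto
    have tr1: "mtrace (X n * Emat d i j * X (inv\<^bsub>G\<^esub> n)) = mtrace (Emat d i j)" if n: "n \<in> N" for n
    proof -
      have "mtrace (X n * Emat d i j * X (inv\<^bsub>G\<^esub> n)) = mtrace (X (inv\<^bsub>G\<^esub> n) * (X n * Emat d i j))"
        by (rule mtrace_comm[of _ d d]) (use Xc n Ni in auto)
      also have "\<dots> = mtrace ((X (inv\<^bsub>G\<^esub> n) * X n) * Emat d i j)"
        using Xc[OF n] Xc[OF Ni[OF n]] by (simp add: assoc_mult_mat[of _ d d _ d _ d])
      also have "\<dots> = mtrace (Emat d i j)" using is_rep_inv(2)[OF G N rep n] by simp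
      finally show ?thesis .
    qed
    have "mtrace (S i j) = (\<Sum>n\<in>N. mtrace (Emat d i j))"
      unfolding S_def by (subst mtrace_msum) (use Xc Ni tr1 in auto)
    also have "\<dots> = of_nat (card N) * (if i = j then 1 else 0)" using mtrace_Emat[OF i j] by simp
    finally have "c * of_nat d = of_nat (card N) * (if i = j then 1 else 0)"
      using c mtrace_smult[of "1\<^sub>m d" d c] by simp
    then have "c = of_nat (card N) * (if i = j then 1 else 0) / of_nat d" using d
      by (simp add: eq_divide_eq)
    then show ?thesis using c i j by simp
  qed
  have "(\<Sum>n\<in>N. mtrace (X n) * mtrace (X (inv\<^bsub>G\<^esub> n))) = (\<Sum>i<d. \<Sum>j<d. S i j $$ (i,j))"
    unfolding S_def by (rule pairing_formula[symmetric]) (use Xc Ni in auto)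
  also have "\<dots> = (\<Sum>i<d. of_nat (card N) / of_nat d)"
    by (rule sum.cong[OF refl]) (simp add: Sij sum.delta)
  also have "\<dots> = of_nat (card N)" using d by simp
  finally show ?thesis .
qed

lemma equiv_irr:
  assumes G: "group G" and N: "subgroup N G" and fin: "finite N" and irr: "irr_rep G N d X"
    and Y: "is_rep G N d Y" and tr: "\<And>n. n \<in> N \<Longrightarrow> mtrace (Y n) = mtrace (X n)"
  shows "\<exists>T Ti. T \<in> carrier_mat d d \<and> Ti \<in> carrier_mat d d \<and> T * Ti = 1\<^sub>m d \<and> Ti * T = 1\<^sub>m d \<and>
     (\<forall>n\<in>N. T * X n = Y n * T)"
proof -
  have d: "d > 0" and rep: "is_rep G N d X" using irr unfolding irr_rep_def by auto
  have Xc: "\<And>n. n \<in> N \<Longrightarrow> X n \<in> carrier_mat d d" using rep unfolding is_rep_def by auto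
  have Yc: "\<And>n. n \<in> N \<Longrightarrow> Y n \<in> carrier_mat d d" using Y unfolding is_rep_def by auto
  have Ni: "\<And>x. x \<in> N \<Longrightarrow> inv\<^bsub>G\<^esub> x \<in> N" using subgroup.m_inv_closed[OF N] by blast
  define S where "S i j = msum d (\<lambda>n. Y n * Emat d i j * X (inv\<^bsub>G\<^esub> n)) N" for i j
  have "(\<Sum>i<d. \<Sum>j<d. S i j $$ (i,j)) = (\<Sum>n\<in>N. mtrace (Y n) * mtrace (X (inv\<^bsub>G\<^esub> n)))"
    unfolding S_def by (rule pairing_formula) (use Yc Xc Ni in auto)
  also have "\<dots> = (\<Sum>n\<in>N. mtrace (X n) * mtrace (X (inv\<^bsub>G\<^esub> n)))" using tr by simp
  also have "\<dots> = of_nat (card N)" by (rule char_norm[OF G N irr])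
  finally have sum: "(\<Sum>i<d. \<Sum>j<d. S i j $$ (i,j)) = of_nat (card N)" .
  have "card N \<noteq> 0" using fin subgroup.one_closed[OF N] by auto
  have "\<exists>i<d. \<exists>j<d. S i j $$ (i,j) \<noteq> 0"
  proof (rule ccontr)
    assume "\<not> ?thesis"
    then have "(\<Sum>i<d. \<Sum>j<d. S i j $$ (i,j)) = 0" by simp
    with sum \<open>card N \<noteq> 0\<close> show False by simp
  qed
  then obtain i j where i: "i < d" and j: "j < d" and nz: "S i j $$ (i,j) \<noteq> 0" by blast
  have Sc: "S i j \<in> carrier_mat d d" unfolding S_def by simp
  have int: "\<And>n. n \<in> N \<Longrightarrow> S i j * X n = Y n * S i j"
    unfolding S_def by (rule avg_intertwine[OF G N Y rep]) auto
  have "S i j \<noteq> 0\<^sub>m d d" using nz i j by auto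
  from intertwine_invertible[OF irr Yc Sc int this]
  obtain Ti where "Ti \<in> carrier_mat d d" "S i j * Ti = 1\<^sub>m d" "Ti * S i j = 1\<^sub>m d" by auto
  then show ?thesis using Sc int by blast
qed

lemma conj_swap:
  fixes T Ti A B :: "complex mat"
  assumes T: "T \<in> carrier_mat d d" and Ti: "Ti \<in> carrier_mat d d" and TTi: "T * Ti = 1\<^sub>m d"
    and TiT: "Ti * T = 1\<^sub>m d" and A: "A \<in> carrier_mat d d" and B: "B \<in> carrier_mat d d"
    and eq: "T * A = B * T"
  shows "A * Ti = Ti * B" "A = Ti * B * T" "B = T * A * Ti"
proof -
  have "A * Ti = (Ti * T) * A * Ti" using TiT left_mult_one_mat[OF A] by simp
  also have "\<dots> = Ti * (T * A) * Ti" using T Ti A by (simp add: assoc_mult_mat[of _ d d _ d _ d])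
  also have "\<dots> = Ti * B * (T * Ti)" using T Ti B eq by (simp add: assoc_mult_mat[of _ d d _ d _ d])
  also have "\<dots> = Ti * B" using TTi Ti B by simp
  finally show 1: "A * Ti = Ti * B" .
  have "A = A * (Ti * T)" using TiT right_mult_one_mat[OF A] by simp
  also have "\<dots> = (A * Ti) * T" using A Ti T by (simp add: assoc_mult_mat[of _ d d _ d _ d])
  also have "\<dots> = Ti * B * T" using 1 by simp
  finally show "A = Ti * B * T" .
  have "B = (T * Ti) * B" using TTi left_mult_one_mat[OF B] by simp
  also have "\<dots> = T * (Ti * B)" using T Ti B by simp
  also have "\<dots> = T * A * Ti" using 1 A Ti T by (simp add: assoc_mult_mat[of _ d d _ d _ d])
  finally show "B = T * A * Ti" .
qed

lemma comm_scalar_equiv: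
  assumes irr: "irr_rep G N d X"
    and T: "T \<in> carrier_mat d d" and Ti: "Ti \<in> carrier_mat d d" and TTi: "T * Ti = 1\<^sub>m d"
    and TiT: "Ti * T = 1\<^sub>m d" and Yc: "\<And>n. n \<in> N \<Longrightarrow> Y n \<in> carrier_mat d d"
    and int: "\<And>n. n \<in> N \<Longrightarrow> T * X n = Y n * T"
    and C: "C \<in> carrier_mat d d" and comm: "\<And>n. n \<in> N \<Longrightarrow> C * Y n = Y n * C"
  shows "\<exists>c. C = c \<cdot>\<^sub>m 1\<^sub>m d"
proof -
  have rep: "is_rep G N d X" using irr unfolding irr_rep_def by auto
  have Xc: "\<And>n. n \<in> N \<Longrightarrow> X n \<in> carrier_mat d d" using rep unfolding is_rep_def by auto
  have "\<exists>c. Ti * C * T = c \<cdot>\<^sub>m 1\<^sub>m d"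
  proof (rule schur_scalar[OF irr])
    show "Ti * C * T \<in> carrier_mat d d" using Ti C T by simp
    fix n assume n: "n \<in> N"
    note sw = conj_swap[OF T Ti TTi TiT Xc[OF n] Yc[OF n] int[OF n]]
    have "Ti * C * T * X n = Ti * C * (T * X n)" using Ti C T Xc[OF n] by (simp add: assoc_mult_mat[of _ d d _ d _ d])
    also have "\<dots> = Ti * (C * Y n) * T" using Ti C T Yc[OF n] int[OF n] by (simp add: assoc_mult_mat[of _ d d _ d _ d])
    also have "\<dots> = (Ti * Y n) * C * T" using Ti C T Yc[OF n] comm[OF n] by (simp add: assoc_mult_mat[of _ d d _ d _ d])
    also have "\<dots> = (X n * Ti) * C * T" by (simp only: sw(1))
    also have "\<dots> = X n * (Ti * C * T)" using Ti C T Xc[OF n] by (simp add: assoc_mult_mat[of _ d d _ d _ d])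
    finally show "Ti * C * T * X n = X n * (Ti * C * T)" .
  qed
  then obtain c where c: "Ti * C * T = c \<cdot>\<^sub>m 1\<^sub>m d" by auto
  have "T * (Ti * C * T) * Ti = (T * Ti) * C * (T * Ti)"
    using Ti C T by (simp add: assoc_mult_mat[of _ d d _ d _ d])
  then have "C = T * (Ti * C * T) * Ti" using TTi left_mult_one_mat[OF C] right_mult_one_mat[OF C] by simp
  also have "\<dots> = c \<cdot>\<^sub>m 1\<^sub>m d"
  proof -
    have "T * (c \<cdot>\<^sub>m 1\<^sub>m d) = c \<cdot>\<^sub>m T" using mult_smult_distrib[OF T one_carrier_mat] right_mult_one_mat[OF T] by simp
    then have "T * (c \<cdot>\<^sub>m 1\<^sub>m d) * Ti = c \<cdot>\<^sub>m (T * Ti)" using mult_smult_assoc_mat[OF T Ti] by simp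
    then show ?thesis using c TTi by simp
  qed
  finally show ?thesis by blast
qed



lemma Qab_closed:
  "0 \<in> Qab" "1 \<in> Qab" "x \<in> Qab \<Longrightarrow> y \<in> Qab \<Longrightarrow> x + y \<in> Qab"
  "x \<in> Qab \<Longrightarrow> y \<in> Qab \<Longrightarrow> x * y \<in> Qab" "x \<in> Qab \<Longrightarrow> - x \<in> Qab"
  "root_of_unity z \<Longrightarrow> z \<in> Qab"
  unfolding Qab_def by auto

lemma Qab_sum: "(\<And>x. x \<in> S \<Longrightarrow> f x \<in> Qab) \<Longrightarrow> sum f S \<in> Qab"
proof (induction S rule: infinite_finite_induct)
  case (infinite A) then show ?case by (simp add: Qab_closed)
next
  case empty then show ?case by (simp add: Qab_closed)
next
  case (insert x F) then show ?case by (simp add: Qab_closed)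
qed

lemma gal_add: "\<sigma> \<in> GalQab \<Longrightarrow> x \<in> Qab \<Longrightarrow> y \<in> Qab \<Longrightarrow> \<sigma> (x + y) = \<sigma> x + \<sigma> y"
  and gal_mult: "\<sigma> \<in> GalQab \<Longrightarrow> x \<in> Qab \<Longrightarrow> y \<in> Qab \<Longrightarrow> \<sigma> (x * y) = \<sigma> x * \<sigma> y"
  and gal_inj: "\<sigma> \<in> GalQab \<Longrightarrow> inj_on \<sigma> Qab"
  and gal_in: "\<sigma> \<in> GalQab \<Longrightarrow> x \<in> Qab \<Longrightarrow> \<sigma> x \<in> Qab"
  unfolding GalQab_def by (auto simp: bij_betw_def)

lemma gal_0: assumes "\<sigma> \<in> GalQab" shows "\<sigma> 0 = 0"
proof -
  have "\<sigma> (0 + 0) = \<sigma> 0 + \<sigma> 0" using gal_add[OF assms] Qab_closed by blast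
  then show ?thesis by simp
qed

lemma gal_zero_iff: assumes "\<sigma> \<in> GalQab" "x \<in> Qab" shows "\<sigma> x = 0 \<longleftrightarrow> x = 0"
proof
  assume "\<sigma> x = 0"
  then have "\<sigma> x = \<sigma> 0" using gal_0[OF assms(1)] by simp
  then show "x = 0" using inj_onD[OF gal_inj[OF assms(1)] _ assms(2) Qab_closed(1)] by simp
qed (simp add: gal_0[OF assms(1)])

lemma gal_1: assumes "\<sigma> \<in> GalQab" shows "\<sigma> 1 = 1"
proof -
  have "\<sigma> (1 * 1) = \<sigma> 1 * \<sigma> 1" using gal_mult[OF assms] Qab_closed by blast
  moreover have "\<sigma> 1 \<noteq> 0" using gal_zero_iff[OF assms Qab_closed(2)] by simp
  ultimately show ?thesis by simp
qed

lemma gal_sum: assumes "\<sigma> \<in> GalQab" shows "(\<And>x. x \<in> S \<Longrightarrow> f x \<in> Qab) \<Longrightarrow> \<sigma> (sum f S) = (\<Sum>x\<in>S. \<sigma> (f x))"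
proof (induction S rule: infinite_finite_induct)
  case (infinite A) then show ?case by (simp add: gal_0[OF assms])
next
  case empty then show ?case by (simp add: gal_0[OF assms])
next
  case (insert x F) then show ?case by (simp add: gal_add[OF assms] Qab_sum)
qed

definition qent :: "complex mat \<Rightarrow> bool" where
  "qent A \<longleftrightarrow> (\<forall>i j. i < dim_row A \<longrightarrow> j < dim_col A \<longrightarrow> A $$ (i,j) \<in> Qab)"

lemma qent_elements: assumes e: "elements_mat A \<subseteq> Qab" shows "qent A"
  unfolding qent_def
proof (intro allI impI)
  fix i j assume i: "i < dim_row A" and j: "j < dim_col A"
  have c: "A \<in> carrier_mat (dim_row A) (dim_col A)" by (rule carrier_matI[OF refl refl])
  have "A $$ (i,j) \<in> elements_mat A" by (rule elements_matI[OF c i j refl])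
  then show "A $$ (i,j) \<in> Qab" using e by blast
qed

lemma qent_mult: assumes "A \<in> carrier_mat n m" "B \<in> carrier_mat m k" "qent A" "qent B"
  shows "qent (A * B)"
  unfolding qent_def
proof (intro allI impI)
  fix i j assume i: "i < dim_row (A * B)" and j: "j < dim_col (A * B)"
  then have i: "i < n" and j: "j < k" using assms by auto
  have "(A * B) $$ (i,j) = (\<Sum>l\<in>{0..<m}. A $$ (i,l) * B $$ (l,j))"
    using assms i j by (simp add: scalar_prod_def)
  also have "\<dots> \<in> Qab"
  proof (rule Qab_sum)
    fix l assume "l \<in> {0..<m}"
    then show "A $$ (i,l) * B $$ (l,j) \<in> Qab" using assms i j by (intro Qab_closed(4)) (auto simp: qent_def)
  qed
  finally show "(A * B) $$ (i,j) \<in> Qab" .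
qed

lemma qent_one: "qent (1\<^sub>m d)"
  unfolding qent_def using Qab_closed(1,2) by simp

lemma map_mult_gal:
  assumes s: "\<sigma> \<in> GalQab" and A: "A \<in> carrier_mat n m" and B: "B \<in> carrier_mat m k"
    and qA: "qent A" and qB: "qent B"
  shows "map_mat \<sigma> (A * B) = map_mat \<sigma> A * map_mat \<sigma> B"
proof (rule eq_matI)
  fix i j assume i: "i < dim_row (map_mat \<sigma> A * map_mat \<sigma> B)" and j: "j < dim_col (map_mat \<sigma> A * map_mat \<sigma> B)"
  then have i: "i < n" and j: "j < k" using A B by auto
  have "map_mat \<sigma> (A * B) $$ (i,j) = \<sigma> (\<Sum>l\<in>{0..<m}. A $$ (i,l) * B $$ (l,j))"
    using A B i j by (simp add: scalar_prod_def)
  also have "\<dots> = (\<Sum>l\<in>{0..<m}. \<sigma> (A $$ (i,l) * B $$ (l,j)))"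
  proof (rule gal_sum[OF s])
    fix l assume "l \<in> {0..<m}"
    then show "A $$ (i,l) * B $$ (l,j) \<in> Qab" using qA qB A B i j by (intro Qab_closed(4)) (auto simp: qent_def)
  qed
  also have "\<dots> = (\<Sum>l\<in>{0..<m}. \<sigma> (A $$ (i,l)) * \<sigma> (B $$ (l,j)))"
  proof (rule sum.cong[OF refl])
    fix l assume "l \<in> {0..<m}"
    then show "\<sigma> (A $$ (i,l) * B $$ (l,j)) = \<sigma> (A $$ (i,l)) * \<sigma> (B $$ (l,j))"
      using qA qB A B i j by (intro gal_mult[OF s]) (auto simp: qent_def)
  qed
  also have "\<dots> = (map_mat \<sigma> A * map_mat \<sigma> B) $$ (i,j)"
    using A B i j by (simp add: scalar_prod_def)
  finally show "map_mat \<sigma> (A * B) $$ (i,j) = (map_mat \<sigma> A * map_mat \<sigma> B) $$ (i,j)" .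
qed (use A B in auto)

lemma map_one_gal: "\<sigma> \<in> GalQab \<Longrightarrow> map_mat \<sigma> (1\<^sub>m d) = 1\<^sub>m d"
  by (rule eq_matI) (auto simp: gal_0 gal_1)

lemma mtrace_Qab: "A \<in> carrier_mat d d \<Longrightarrow> qent A \<Longrightarrow> mtrace A \<in> Qab"
  unfolding mtrace_def qent_def by (auto intro!: Qab_sum)

lemma mtrace_gal: assumes s: "\<sigma> \<in> GalQab" and A: "A \<in> carrier_mat d d" and q: "qent A"
  shows "mtrace (map_mat \<sigma> A) = \<sigma> (mtrace A)"
proof -
  have "\<sigma> (mtrace A) = (\<Sum>i<d. \<sigma> (A $$ (i,i)))"
    unfolding mtrace_def using A q by (subst gal_sum[OF s]) (auto simp: qent_def)
  then show ?thesis unfolding mtrace_def using A by simp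
qed

lemma map_zero_gal: assumes s: "\<sigma> \<in> GalQab" and A: "A \<in> carrier_mat n m" and q: "qent A"
  and z: "map_mat \<sigma> A = 0\<^sub>m n m" shows "A = 0\<^sub>m n m"
proof (rule eq_matI)
  fix i j assume "i < dim_row (0\<^sub>m n m)" "j < dim_col (0\<^sub>m n m)"
  then have i: "i < n" and j: "j < m" by auto
  have "\<sigma> (A $$ (i,j)) = 0" using arg_cong[OF z, of "\<lambda>M. M $$ (i,j)"] A i j by simp
  then show "A $$ (i,j) = 0\<^sub>m n m $$ (i,j)" using gal_zero_iff[OF s] q A i j by (simp add: qent_def)
qed (use A in auto)

lemma smult_cancel:
  fixes M :: "complex mat"
  assumes M: "M \<in> carrier_mat n m" and nz: "M \<noteq> 0\<^sub>m n m" and eq: "a \<cdot>\<^sub>m M = b \<cdot>\<^sub>m M"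
  shows "a = b"
proof -
  have "\<exists>i<n. \<exists>j<m. M $$ (i,j) \<noteq> 0"
  proof (rule ccontr)
    assume "\<not> ?thesis"
    then have "M = 0\<^sub>m n m" using M by (intro eq_matI) auto
    with nz show False by simp
  qed
  then obtain i j where i: "i < n" and j: "j < m" and e: "M $$ (i,j) \<noteq> 0" by blast
  have "a * M $$ (i,j) = b * M $$ (i,j)" using arg_cong[OF eq, of "\<lambda>M. M $$ (i,j)"] M i j by simp
  then show ?thesis using e by simp
qed



lemma smult_smult_m: "a \<cdot>\<^sub>m (b \<cdot>\<^sub>m A) = (a * b) \<cdot>\<^sub>m (A :: complex mat)"
  by (rule eq_matI) auto
lemma one_smult_m: "1 \<cdot>\<^sub>m A = (A :: complex mat)"
  by (rule eq_matI) auto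
lemma zero_smult_m: "A \<in> carrier_mat n m \<Longrightarrow> 0 \<cdot>\<^sub>m A = (0\<^sub>m n m :: complex mat)"
  by (rule eq_matI) auto


lemma inv_cancel_left:
  fixes A B X :: "complex mat"
  assumes "A \<in> carrier_mat d d" "B \<in> carrier_mat d d" "X \<in> carrier_mat d d" "A * B = 1\<^sub>m d"
  shows "A * (B * X) = X"
  using assms by (simp add: assoc_mult_mat[of _ d d _ d _ d, symmetric])

lemma smult_sandwich:
  fixes A B X :: "complex mat"
  assumes "A \<in> carrier_mat d d" "B \<in> carrier_mat d d" "X \<in> carrier_mat d d"
  shows "A * (a \<cdot>\<^sub>m X) * B = a \<cdot>\<^sub>m (A * X * B)"
  using assms by (simp add: mult_smult_distrib[of _ d d _ d] mult_smult_assoc_mat[of _ d d _ d])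

lemma smult_one_right: "(A :: complex mat) \<in> carrier_mat d d \<Longrightarrow> A * (c \<cdot>\<^sub>m 1\<^sub>m d) = c \<cdot>\<^sub>m A"
  by (simp add: mult_smult_distrib[of _ d d _ d])
lemma smult_one_left: "(A :: complex mat) \<in> carrier_mat d d \<Longrightarrow> (c \<cdot>\<^sub>m 1\<^sub>m d) * A = c \<cdot>\<^sub>m A"
  by (simp add: mult_smult_assoc_mat[of _ d d _ d])

locale mu_setting = group +
  fixes p :: nat and K N :: "'a set" and \<theta> :: "'a \<Rightarrow> complex"
    and d :: nat and P :: "'a \<Rightarrow> complex mat" and \<alpha> :: "'a \<Rightarrow> 'a \<Rightarrow> complex"
    and X0 :: "'a \<Rightarrow> complex mat"
  assumes fin: "finite (carrier G)"
    and K: "subgroup K G" and nor: "normal_in G K N"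
    and irr: "irr_rep G N d X0" and thX: "\<And>n. n \<in> N \<Longrightarrow> \<theta> n = mtrace (X0 n)"
    and ap: "assoc_proj G (inertia G K N \<theta>) N \<theta> d P \<alpha>"
    and qP: "\<And>x. x \<in> inertia G K N \<theta> \<Longrightarrow> qent (P x)"
begin

abbreviation "T \<equiv> inertia G K N \<theta>"

lemma cancel1[simp]: "x \<in> carrier G \<Longrightarrow> y \<in> carrier G \<Longrightarrow> x \<otimes> (inv x \<otimes> y) = y"
  by (metis inv_closed inv_solve_left m_closed)
lemma cancel2[simp]: "x \<in> carrier G \<Longrightarrow> y \<in> carrier G \<Longrightarrow> inv x \<otimes> (x \<otimes> y) = y"
  by (metis inv_closed inv_solve_left' m_closed)

lemmas gsimps = m_assoc inv_mult_group

lemma Nsub: "subgroup N G" and NsubK: "N \<subseteq> K"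
  and nconj: "k \<in> K \<Longrightarrow> n \<in> N \<Longrightarrow> k \<otimes> n \<otimes> inv k \<in> N"
  using nor unfolding normal_in_def by auto

lemma Kc: "x \<in> K \<Longrightarrow> x \<in> carrier G" using subgroup.subset[OF K] by blast
lemma Nc: "x \<in> N \<Longrightarrow> x \<in> carrier G" using subgroup.subset[OF Nsub] by blast
lemma Ninv: "x \<in> N \<Longrightarrow> inv x \<in> N" using subgroup.m_inv_closed[OF Nsub] by blast
lemma Nmult: "x \<in> N \<Longrightarrow> y \<in> N \<Longrightarrow> x \<otimes> y \<in> N" using subgroup.m_closed[OF Nsub] by blast
lemma Kinv: "x \<in> K \<Longrightarrow> inv x \<in> K" using subgroup.m_inv_closed[OF K] by blast
lemma Kmult: "x \<in> K \<Longrightarrow> y \<in> K \<Longrightarrow> x \<otimes> y \<in> K" using subgroup.m_closed[OF K] by blast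
lemma N1: "\<one> \<in> N" using subgroup.one_closed[OF Nsub] .

lemma TK: "x \<in> T \<Longrightarrow> x \<in> K" unfolding inertia_def by auto

lemma Prep: "is_rep G N d P" and Pthe: "\<And>n. n \<in> N \<Longrightarrow> \<theta> n = mtrace (P n)"
  and PNg: "\<And>n g. n \<in> N \<Longrightarrow> g \<in> T \<Longrightarrow> P (n \<otimes> g) = P n * P g \<and> P (g \<otimes> n) = P g * P n"
  and Pproj: "proj_rep G T d P \<alpha>"
  using ap unfolding assoc_proj_def by auto

lemma PcN: "n \<in> N \<Longrightarrow> P n \<in> carrier_mat d d" using Prep unfolding is_rep_def by auto
lemma P1: "P \<one> = 1\<^sub>m d" using Prep unfolding is_rep_def by auto
lemma PmN: "x \<in> N \<Longrightarrow> y \<in> N \<Longrightarrow> P (x \<otimes> y) = P x * P y" using Prep unfolding is_rep_def by auto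
lemma Pc: "x \<in> T \<Longrightarrow> P x \<in> carrier_mat d d" and Pinvt: "x \<in> T \<Longrightarrow> invertible_mat (P x)"
  using Pproj unfolding proj_rep_def by auto

lemma d_pos: "d > 0" using irr unfolding irr_rep_def by auto
lemma X0rep: "is_rep G N d X0" using irr unfolding irr_rep_def by auto

lemma theta_class: assumes n: "n \<in> N" and m: "m \<in> N" shows "\<theta> (n \<otimes> m \<otimes> inv n) = \<theta> m"
proof -
  have "\<theta> (n \<otimes> m \<otimes> inv n) = mtrace (P n * P m * P (inv n))"
    using Pthe PmN n m Ninv Nmult by metis
  also have "\<dots> = mtrace (P (inv n) * (P n * P m))"
    by (rule mtrace_comm[of _ d d]) (use PcN n m Ninv in auto)
  also have "\<dots> = mtrace ((P (inv n) * P n) * P m)"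
    using PcN n m Ninv by (simp add: assoc_mult_mat[of _ d d _ d _ d])
  also have "\<dots> = mtrace (P m)" using is_rep_inv(2)[OF is_group Nsub Prep n] PcN[OF m] by simp
  finally show ?thesis using Pthe m by simp
qed

lemma N_T: assumes n: "n \<in> N" shows "n \<in> T"
  unfolding inertia_def using n NsubK theta_class by auto

lemma one_T: "\<one> \<in> T" using N_T N1 by blast

lemma NT: assumes n: "n \<in> N" and y: "y \<in> T" shows "n \<otimes> y \<in> T"
proof -
  have yK: "y \<in> K" using TK y .
  have yc: "y \<in> carrier G" using Kc yK . 
  have nc: "n \<in> carrier G" using Nc n .
  have "\<theta> (n \<otimes> y \<otimes> m \<otimes> inv (n \<otimes> y)) = \<theta> m" if m: "m \<in> N" for m
  proof -
    have mc: "m \<in> carrier G" using Nc m .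
    have "n \<otimes> y \<otimes> m \<otimes> inv (n \<otimes> y) = n \<otimes> (y \<otimes> m \<otimes> inv y) \<otimes> inv n"
      using nc yc mc by (simp add: gsimps)
    moreover have "y \<otimes> m \<otimes> inv y \<in> N" using nconj yK m .
    moreover have "\<theta> (y \<otimes> m \<otimes> inv y) = \<theta> m" using y m unfolding inertia_def by auto
    ultimately show ?thesis using theta_class n by simp
  qed
  moreover have "n \<otimes> y \<in> K" using Kmult NsubK n yK by blast
  ultimately show ?thesis unfolding inertia_def by auto
qed

lemma theta_Qab: "n \<in> N \<Longrightarrow> \<theta> n \<in> Qab"
  using Pthe mtrace_Qab PcN qP N_T by metis

lemma conjT:
  assumes hs: "(h, \<sigma>) \<in> pstab G p K N \<theta>" and y: "y \<in> T"
  shows "h \<otimes> y \<otimes> inv h \<in> T"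
proof -
  have hK: "h \<in> K" and sH: "\<sigma> \<in> HGal p" and pst: "\<And>n. n \<in> N \<Longrightarrow> \<sigma> (\<theta> (h \<otimes> n \<otimes> inv h)) = \<theta> n"
    using hs unfolding pstab_def by auto
  have sG: "\<sigma> \<in> GalQab" using sH unfolding HGal_def by auto
  have hc: "h \<in> carrier G" using Kc hK .
  have yK: "y \<in> K" using TK y .
  have yc: "y \<in> carrier G" using Kc yK .
  let ?a = "h \<otimes> y \<otimes> inv h"
  have aK: "?a \<in> K" using hK yK Kmult Kinv by blast
  have "\<theta> (?a \<otimes> m \<otimes> inv ?a) = \<theta> m" if m: "m \<in> N" for m
  proof -
    have mc: "m \<in> carrier G" using Nc m .
    define m' where "m' = inv h \<otimes> m \<otimes> inv (inv h)"
    have m'N: "m' \<in> N" unfolding m'_def using nconj[OF Kinv[OF hK] m] .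
    have m'c: "m' \<in> carrier G" using Nc m'N .
    have e1: "?a \<otimes> m \<otimes> inv ?a = h \<otimes> (y \<otimes> m' \<otimes> inv y) \<otimes> inv h"
      unfolding m'_def using hc yc mc by (simp add: gsimps)
    have e2: "h \<otimes> m' \<otimes> inv h = m" unfolding m'_def using hc mc by (simp add: gsimps)
    have ym: "y \<otimes> m' \<otimes> inv y \<in> N" using nconj yK m'N .
    have "\<sigma> (\<theta> (?a \<otimes> m \<otimes> inv ?a)) = \<theta> (y \<otimes> m' \<otimes> inv y)" unfolding e1 using pst ym .
    also have "\<dots> = \<theta> m'" using y m'N unfolding inertia_def by auto
    also have "\<dots> = \<sigma> (\<theta> m)" using pst[OF m'N] e2 by simp
    finally have "\<sigma> (\<theta> (?a \<otimes> m \<otimes> inv ?a)) = \<sigma> (\<theta> m)" .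
    moreover have "?a \<otimes> m \<otimes> inv ?a \<in> N" using nconj aK m .
    ultimately show ?thesis using inj_onD[OF gal_inj[OF sG]] theta_Qab m by blast
  qed
  then show ?thesis unfolding inertia_def using aK by auto
qed

lemma finN: "finite N" using finite_subset[OF subgroup.subset[OF Nsub] fin] .

lemma T1ex: "\<exists>T1 T1i. T1 \<in> carrier_mat d d \<and> T1i \<in> carrier_mat d d \<and> T1 * T1i = 1\<^sub>m d \<and> T1i * T1 = 1\<^sub>m d \<and>
     (\<forall>n\<in>N. T1 * X0 n = P n * T1)"
  by (rule equiv_irr[OF is_group Nsub finN irr Prep]) (simp add: Pthe[symmetric] thX)

lemma commP:
  assumes C: "C \<in> carrier_mat d d" and comm: "\<And>n. n \<in> N \<Longrightarrow> C * P n = P n * C"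
  shows "\<exists>c. C = c \<cdot>\<^sub>m 1\<^sub>m d"
proof -
  obtain T1 T1i where t: "T1 \<in> carrier_mat d d" "T1i \<in> carrier_mat d d" "T1 * T1i = 1\<^sub>m d" "T1i * T1 = 1\<^sub>m d"
    "\<And>n. n \<in> N \<Longrightarrow> T1 * X0 n = P n * T1" using T1ex by blast
  show ?thesis by (rule comm_scalar_equiv[OF irr t(1-4) PcN t(5) C comm])
qed

lemma Pinv_ex: assumes y: "y \<in> T"
  shows "\<exists>B. B \<in> carrier_mat d d \<and> P y * B = 1\<^sub>m d \<and> B * P y = 1\<^sub>m d"
proof -
  obtain B where b1: "inverts_mat (P y) B" and b2: "inverts_mat B (P y)"
    using Pinvt[OF y] unfolding invertible_mat_def by blast
  have Py: "P y \<in> carrier_mat d d" using Pc[OF y] .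
  have e1: "P y * B = 1\<^sub>m d" using b1 Py unfolding inverts_mat_def by auto
  have e2: "B * P y = 1\<^sub>m (dim_row B)" using b2 unfolding inverts_mat_def by auto
  have "dim_col B = d" using arg_cong[OF e1, of dim_col] by simp
  moreover have "dim_row B = d" using arg_cong[OF e2, of dim_col] Py by simp
  ultimately have "B \<in> carrier_mat d d" by (intro carrier_matI)
  then show ?thesis using e1 e2 \<open>dim_row B = d\<close> by auto
qed

lemma Pnz: assumes y: "y \<in> T" shows "P y \<noteq> 0\<^sub>m d d"
proof
  assume z: "P y = 0\<^sub>m d d"
  obtain B where B: "B \<in> carrier_mat d d" "P y * B = 1\<^sub>m d" using Pinv_ex[OF y] by blast
  have "0\<^sub>m d d * B = 1\<^sub>m d" using B(2) unfolding z .
  moreover have "0\<^sub>m d d * B = 0\<^sub>m d d" using left_mult_zero_mat[OF B(1)] .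
  ultimately have "(0\<^sub>m d d :: complex mat) $$ (0,0) = 1\<^sub>m d $$ (0,0)" by simp
  then show False using d_pos by simp
qed


lemma is_mu_unfold:
  "is_mu G K N \<theta> P h \<sigma> \<mu> \<longleftrightarrow> (\<forall>y. y \<notin> T \<longrightarrow> \<mu> y = 0) \<and> (\<forall>y\<in>T. \<mu> y \<noteq> 0) \<and>
     (\<forall>y\<in>T. \<forall>n\<in>N. \<mu> (n \<otimes> y) = \<mu> y) \<and> \<mu> \<one> = 1 \<and>
     (\<exists>M Mi. M \<in> carrier_mat d d \<and> Mi \<in> carrier_mat d d \<and> M * Mi = 1\<^sub>m d \<and> Mi * M = 1\<^sub>m d \<and>
        (\<forall>y\<in>T. map_mat \<sigma> (P (h \<otimes> y \<otimes> inv h)) = \<mu> y \<cdot>\<^sub>m (Mi * P y * M)))"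
proof -
  have aux: "\<And>M Mi. M \<in> carrier_mat d d \<Longrightarrow> Mi \<in> carrier_mat d d \<Longrightarrow>
     (inverts_mat M Mi \<and> inverts_mat Mi M) \<longleftrightarrow> (M * Mi = 1\<^sub>m d \<and> Mi * M = 1\<^sub>m d)"
    unfolding inverts_mat_def by auto
  have dr: "dim_row (P \<one>) = d" using P1 by simp
  show ?thesis unfolding is_mu_def Let_def dr
    by (intro conj_cong refl iffI; elim exE conjE; intro exI conjI; (assumption | use aux in blast))
qed

lemma mu_on_N:
  assumes m: "is_mu G K N \<theta> P h \<sigma> \<mu>" and n: "n \<in> N" shows "\<mu> n = 1"
proof -
  have "\<mu> (n \<otimes> \<one>) = \<mu> \<one>" using m one_T n unfolding is_mu_unfold by blast
  then show ?thesis using m Nc[OF n] unfolding is_mu_unfold by simp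
qed

lemma mu_unique:
  assumes m1: "is_mu G K N \<theta> P h \<sigma> \<mu>1" and m2: "is_mu G K N \<theta> P h \<sigma> \<mu>2"
  shows "\<mu>1 = \<mu>2"
proof -
  obtain M1 Mi1 where M1: "M1 \<in> carrier_mat d d" and Mi1: "Mi1 \<in> carrier_mat d d"
    and i11: "M1 * Mi1 = 1\<^sub>m d" and i12: "Mi1 * M1 = 1\<^sub>m d"
    and e1: "\<And>y. y \<in> T \<Longrightarrow> map_mat \<sigma> (P (h \<otimes> y \<otimes> inv h)) = \<mu>1 y \<cdot>\<^sub>m (Mi1 * P y * M1)"
    using m1 unfolding is_mu_unfold by blast
  obtain M2 Mi2 where M2: "M2 \<in> carrier_mat d d" and Mi2: "Mi2 \<in> carrier_mat d d"
    and i21: "M2 * Mi2 = 1\<^sub>m d" and i22: "Mi2 * M2 = 1\<^sub>m d"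
    and e2: "\<And>y. y \<in> T \<Longrightarrow> map_mat \<sigma> (P (h \<otimes> y \<otimes> inv h)) = \<mu>2 y \<cdot>\<^sub>m (Mi2 * P y * M2)"
    using m2 unfolding is_mu_unfold by blast
  have eqN: "Mi1 * P n * M1 = Mi2 * P n * M2" if n: "n \<in> N" for n
    using e1[OF N_T[OF n]] e2[OF N_T[OF n]] mu_on_N[OF m1 n] mu_on_N[OF m2 n] by (simp add: one_smult_m)
  define C where "C = M1 * Mi2"
  have Cc: "C \<in> carrier_mat d d" unfolding C_def using M1 Mi2 by simp
  have comm: "C * P n = P n * C" if n: "n \<in> N" for n
  proof -
    have Pn: "P n \<in> carrier_mat d d" using PcN[OF n] .
    have "C * P n = M1 * (Mi2 * P n * M2) * Mi2"
      unfolding C_def using M1 Mi2 M2 Pn i21 by (simp add: assoc_mult_mat[of _ d d _ d _ d])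
    also have "\<dots> = M1 * (Mi1 * P n * M1) * Mi2" using eqN[OF n] by simp
    also have "\<dots> = P n * C"
      unfolding C_def using M1 Mi1 Mi2 Pn i11 by (simp add: assoc_mult_mat[of _ d d _ d _ d] inv_cancel_left)
    finally show ?thesis .
  qed
  obtain c where c: "C = c \<cdot>\<^sub>m 1\<^sub>m d" using commP[OF Cc comm] by blast
  have cnz: "c \<noteq> 0"
  proof
    assume "c = 0"
    then have "C = 0\<^sub>m d d" using c zero_smult_m[of "1\<^sub>m d" d d] by simp
    moreover have "C * (M2 * Mi1) = 1\<^sub>m d"
      unfolding C_def using M1 Mi1 Mi2 M2 i22 i11 by (simp add: assoc_mult_mat[of _ d d _ d _ d] inv_cancel_left)
    ultimately have "0\<^sub>m d d = (1\<^sub>m d :: complex mat)" using left_mult_zero_mat[of "M2 * Mi1" d d d] M2 Mi1 by simp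
    then have "(0\<^sub>m d d :: complex mat) $$ (0,0) = 1\<^sub>m d $$ (0,0)" by simp
    then show False using d_pos by simp
  qed
  show ?thesis
  proof
    fix y
    show "\<mu>1 y = \<mu>2 y"
    proof (cases "y \<in> T")
      case False then show ?thesis using m1 m2 unfolding is_mu_unfold by simp
    next
      case True
      have Py: "P y \<in> carrier_mat d d" using Pc[OF True] .
      have e: "\<mu>1 y \<cdot>\<^sub>m (Mi1 * P y * M1) = \<mu>2 y \<cdot>\<^sub>m (Mi2 * P y * M2)"
        using e1[OF True] e2[OF True] by simp
      have "M1 * (\<mu>1 y \<cdot>\<^sub>m (Mi1 * P y * M1)) * Mi2 = \<mu>1 y \<cdot>\<^sub>m (M1 * (Mi1 * P y * M1) * Mi2)"
        using M1 Mi1 Mi2 Py by (simp add: smult_sandwich)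
      also have "M1 * (Mi1 * P y * M1) * Mi2 = P y * C"
        unfolding C_def using M1 Mi1 Mi2 Py i11 by (simp add: assoc_mult_mat[of _ d d _ d _ d] inv_cancel_left)
      also have "\<dots> = c \<cdot>\<^sub>m P y" unfolding c using Py by (simp add: smult_one_right)
      finally have L: "M1 * (\<mu>1 y \<cdot>\<^sub>m (Mi1 * P y * M1)) * Mi2 = (\<mu>1 y * c) \<cdot>\<^sub>m P y"
        by (simp add: smult_smult_m)
      have "M1 * (\<mu>2 y \<cdot>\<^sub>m (Mi2 * P y * M2)) * Mi2 = \<mu>2 y \<cdot>\<^sub>m (M1 * (Mi2 * P y * M2) * Mi2)"
        using M1 M2 Mi2 Py by (simp add: smult_sandwich)
      also have "M1 * (Mi2 * P y * M2) * Mi2 = C * P y"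
        unfolding C_def using M1 M2 Mi2 Py i21 by (simp add: assoc_mult_mat[of _ d d _ d _ d] inv_cancel_left)
      also have "\<dots> = c \<cdot>\<^sub>m P y" unfolding c using Py by (simp add: smult_one_left)
      finally have R: "M1 * (\<mu>2 y \<cdot>\<^sub>m (Mi2 * P y * M2)) * Mi2 = (\<mu>2 y * c) \<cdot>\<^sub>m P y"
        by (simp add: smult_smult_m)
      have "(\<mu>1 y * c) \<cdot>\<^sub>m P y = (\<mu>2 y * c) \<cdot>\<^sub>m P y" using L R e by simp
      then have "\<mu>1 y * c = \<mu>2 y * c" using smult_cancel[OF Py Pnz[OF True]] by blast
      then show ?thesis using cnz by simp
    qed
  qed
qed


lemma mu_exists:
  assumes hs: "(h, \<sigma>) \<in> pstab G p K N \<theta>"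
  shows "\<exists>\<mu>. is_mu G K N \<theta> P h \<sigma> \<mu>"
proof -
  have hK: "h \<in> K" and sH: "\<sigma> \<in> HGal p" and pst: "\<And>n. n \<in> N \<Longrightarrow> \<sigma> (\<theta> (h \<otimes> n \<otimes> inv h)) = \<theta> n"
    using hs unfolding pstab_def by auto
  have sG: "\<sigma> \<in> GalQab" using sH unfolding HGal_def by auto
  have hc: "h \<in> carrier G" using Kc hK .
  define ch where "ch y = h \<otimes> y \<otimes> inv h" for y
  have chT: "\<And>y. y \<in> T \<Longrightarrow> ch y \<in> T" unfolding ch_def using conjT[OF hs] .
  have chN: "\<And>n. n \<in> N \<Longrightarrow> ch n \<in> N" unfolding ch_def using nconj[OF hK] .
  have Tc: "\<And>y. y \<in> T \<Longrightarrow> y \<in> carrier G" using TK Kc by blast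
  have chm: "ch (x \<otimes> y) = ch x \<otimes> ch y" if "x \<in> carrier G" "y \<in> carrier G" for x y
    unfolding ch_def using that hc by (simp add: gsimps)
  have ch1: "ch \<one> = \<one>" unfolding ch_def using hc by simp
  define Q where "Q y = map_mat \<sigma> (P (ch y))" for y
  have Qc: "\<And>y. y \<in> T \<Longrightarrow> Q y \<in> carrier_mat d d" unfolding Q_def using Pc chT by simp
  have QNT: "Q (n \<otimes> y) = Q n * Q y" if n: "n \<in> N" and y: "y \<in> T" for n y
  proof -
    have "Q (n \<otimes> y) = map_mat \<sigma> (P (ch n) * P (ch y))"
      unfolding Q_def using chm Nc[OF n] Tc[OF y] PNg chN[OF n] chT[OF y] by simp
    also have "\<dots> = Q n * Q y" unfolding Q_def
      by (rule map_mult_gal[OF sG, where n=d and m=d and k=d]) (use Pc qP chT N_T chN n y in auto)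
    finally show ?thesis .
  qed
  have QTN: "Q (y \<otimes> n) = Q y * Q n" if n: "n \<in> N" and y: "y \<in> T" for n y
  proof -
    have "Q (y \<otimes> n) = map_mat \<sigma> (P (ch y) * P (ch n))"
      unfolding Q_def using chm Nc[OF n] Tc[OF y] PNg chN[OF n] chT[OF y] by simp
    also have "\<dots> = Q y * Q n" unfolding Q_def
      by (rule map_mult_gal[OF sG, where n=d and m=d and k=d]) (use Pc qP chT N_T chN n y in auto)
    finally show ?thesis .
  qed
  have Q1: "Q \<one> = 1\<^sub>m d" unfolding Q_def ch1 P1 using map_one_gal[OF sG] .
  have Qrep: "is_rep G N d Q"
    unfolding is_rep_def using Qc N_T Q1 QNT by auto
  have Qtr: "mtrace (Q n) = mtrace (X0 n)" if n: "n \<in> N" for n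
  proof -
    have "mtrace (Q n) = \<sigma> (mtrace (P (ch n)))"
      unfolding Q_def by (rule mtrace_gal[OF sG]) (use PcN qP N_T chN n in auto)
    also have "\<dots> = \<sigma> (\<theta> (ch n))" using Pthe chN n by simp
    also have "\<dots> = \<theta> n" using pst n unfolding ch_def by simp
    finally show ?thesis using thX n by simp
  qed
  obtain T2 T2i where t2: "T2 \<in> carrier_mat d d" "T2i \<in> carrier_mat d d" "T2 * T2i = 1\<^sub>m d" "T2i * T2 = 1\<^sub>m d"
    "\<And>n. n \<in> N \<Longrightarrow> T2 * X0 n = Q n * T2"
    using equiv_irr[OF is_group Nsub finN irr Qrep Qtr] by blast
  obtain T1 T1i where t1: "T1 \<in> carrier_mat d d" "T1i \<in> carrier_mat d d" "T1 * T1i = 1\<^sub>m d" "T1i * T1 = 1\<^sub>m d"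
    "\<And>n. n \<in> N \<Longrightarrow> T1 * X0 n = P n * T1" using T1ex by blast
  define A where "A = T1 * T2i"
  define Ai where "Ai = T2 * T1i"
  have Ac: "A \<in> carrier_mat d d" and Aic: "Ai \<in> carrier_mat d d" unfolding A_def Ai_def using t1 t2 by auto
  have AAi: "A * Ai = 1\<^sub>m d" unfolding A_def Ai_def using t1 t2
    by (simp add: assoc_mult_mat[of _ d d _ d _ d] inv_cancel_left)
  have AiA: "Ai * A = 1\<^sub>m d" unfolding A_def Ai_def using t1 t2
    by (simp add: assoc_mult_mat[of _ d d _ d _ d] inv_cancel_left)
  have X0c: "\<And>n. n \<in> N \<Longrightarrow> X0 n \<in> carrier_mat d d" using X0rep unfolding is_rep_def by auto
  have QN: "Q n = Ai * P n * A" if n: "n \<in> N" for n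
  proof -
    have "Q n = T2 * X0 n * T2i" using conj_swap(3)[OF t2(1-4) X0c[OF n] Qc[OF N_T[OF n]] t2(5)[OF n]] .
    also have "X0 n = T1i * P n * T1" using conj_swap(2)[OF t1(1-4) X0c[OF n] PcN[OF n] t1(5)[OF n]] .
    finally show ?thesis unfolding A_def Ai_def using t1 t2 PcN[OF n]
      by (simp add: assoc_mult_mat[of _ d d _ d _ d])
  qed
  have PN: "P n = A * Q n * Ai" if n: "n \<in> N" for n
    using QN[OF n] Ac Aic PcN[OF n] AAi by (simp add: assoc_mult_mat[of _ d d _ d _ d] inv_cancel_left)
  have scal: "\<exists>c. Q y = c \<cdot>\<^sub>m (Ai * P y * A)" if y: "y \<in> T" for y
  proof -
    define D where "D = A * Q y * Ai"
    have Dc: "D \<in> carrier_mat d d" unfolding D_def using Ac Aic Qc[OF y] by simp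
    have Py: "P y \<in> carrier_mat d d" using Pc[OF y] .
    obtain B where B: "B \<in> carrier_mat d d" "P y * B = 1\<^sub>m d" "B * P y = 1\<^sub>m d" using Pinv_ex[OF y] by blast
    have yK: "y \<in> K" using TK y .
    have yc: "y \<in> carrier G" using Kc yK .
    have key1: "D * P n = P (y \<otimes> n \<otimes> inv y) * D" if n: "n \<in> N" for n
    proof -
      have yn: "y \<otimes> n \<otimes> inv y \<in> N" using nconj yK n .
      have "D * P n = A * (Q y * Q n) * Ai"
        unfolding D_def PN[OF n] using Ac Aic Qc[OF y] Qc[OF N_T[OF n]] AiA
        by (simp add: assoc_mult_mat[of _ d d _ d _ d] inv_cancel_left)
      also have "Q y * Q n = Q (y \<otimes> n)" using QTN[OF n y] by simp
      also have "y \<otimes> n = (y \<otimes> n \<otimes> inv y) \<otimes> y" using yc Nc[OF n] by (simp add: gsimps)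
      also have "Q \<dots> = Q (y \<otimes> n \<otimes> inv y) * Q y" using QNT[OF yn y] .
      also have "A * (Q (y \<otimes> n \<otimes> inv y) * Q y) * Ai = P (y \<otimes> n \<otimes> inv y) * D"
        unfolding D_def PN[OF yn] using Ac Aic Qc[OF y] Qc[OF N_T[OF yn]] AiA
        by (simp add: assoc_mult_mat[of _ d d _ d _ d] inv_cancel_left)
      finally show ?thesis .
    qed
    have key3: "B * P (y \<otimes> n \<otimes> inv y) = P n * B" if n: "n \<in> N" for n
    proof -
      have yn: "y \<otimes> n \<otimes> inv y \<in> N" using nconj yK n .
      have e: "(y \<otimes> n \<otimes> inv y) \<otimes> y = y \<otimes> n" using yc Nc[OF n] by (simp add: gsimps)
      have key2: "P (y \<otimes> n \<otimes> inv y) * P y = P y * P n"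
        using PNg[OF yn y] PNg[OF n y] e by metis
      have Pyn: "P (y \<otimes> n \<otimes> inv y) \<in> carrier_mat d d" using PcN[OF yn] .
      have "B * P (y \<otimes> n \<otimes> inv y) = B * (P (y \<otimes> n \<otimes> inv y) * P y) * B"
        using B Py Pyn by (simp add: assoc_mult_mat[of _ d d _ d _ d] inv_cancel_left)
      also have "\<dots> = B * (P y * P n) * B" using key2 by simp
      also have "\<dots> = P n * B"
        using B Py PcN[OF n] by (simp add: assoc_mult_mat[of _ d d _ d _ d] inv_cancel_left)
      finally show ?thesis .
    qed
    have "\<exists>c. B * D = c \<cdot>\<^sub>m 1\<^sub>m d"
    proof (rule commP)
      show "B * D \<in> carrier_mat d d" using B Dc by simp
      fix n assume n: "n \<in> N"
      have yn: "y \<otimes> n \<otimes> inv y \<in> N" using nconj yK n .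
      have "B * D * P n = B * (P (y \<otimes> n \<otimes> inv y) * D)"
        using B Dc PcN[OF n] key1[OF n] by (simp add: assoc_mult_mat[of _ d d _ d _ d])
      also have "\<dots> = (B * P (y \<otimes> n \<otimes> inv y)) * D"
        using B Dc PcN[OF yn] by (simp add: assoc_mult_mat[of _ d d _ d _ d])
      also have "\<dots> = P n * (B * D)"
        using key3[OF n] B Dc PcN[OF n] by (simp add: assoc_mult_mat[of _ d d _ d _ d])
      finally show "B * D * P n = P n * (B * D)" .
    qed
    then obtain c where c: "B * D = c \<cdot>\<^sub>m 1\<^sub>m d" by blast
    have "D = P y * (B * D)" using B Py Dc by (simp add: assoc_mult_mat[of _ d d _ d _ d, symmetric] inv_cancel_left)
    also have "\<dots> = c \<cdot>\<^sub>m P y" unfolding c using Py by (simp add: smult_one_right)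
    finally have Dy: "D = c \<cdot>\<^sub>m P y" .
    have "Q y = Ai * D * A" unfolding D_def using Ac Aic Qc[OF y] AiA
      by (simp add: assoc_mult_mat[of _ d d _ d _ d] inv_cancel_left)
    also have "\<dots> = c \<cdot>\<^sub>m (Ai * P y * A)" unfolding Dy using Ac Aic Py by (simp add: smult_sandwich)
    finally show ?thesis by blast
  qed
  define \<mu> where "\<mu> y = (if y \<in> T then (SOME c. Q y = c \<cdot>\<^sub>m (Ai * P y * A)) else 0)" for y
  have \<mu>eq: "Q y = \<mu> y \<cdot>\<^sub>m (Ai * P y * A)" if y: "y \<in> T" for y
    unfolding \<mu>_def using y someI_ex[OF scal[OF y]] by simp
  have Mc: "\<And>y. y \<in> T \<Longrightarrow> Ai * P y * A \<in> carrier_mat d d" using Ac Aic Pc by simp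
  have Mnz: "Ai * P y * A \<noteq> 0\<^sub>m d d" if y: "y \<in> T" for y
  proof
    assume z: "Ai * P y * A = 0\<^sub>m d d"
    have "P y = A * (Ai * P y * A) * Ai" using Ac Aic Pc[OF y] AAi
      by (simp add: assoc_mult_mat[of _ d d _ d _ d] inv_cancel_left)
    also have "\<dots> = 0\<^sub>m d d" unfolding z using Ac Aic by simp
    finally show False using Pnz[OF y] by simp
  qed
  have \<mu>1: "\<mu> \<one> = 1"
  proof -
    have "Ai * P \<one> * A = 1\<^sub>m d" using P1 Aic AiA by simp
    then have "\<mu> \<one> \<cdot>\<^sub>m (Ai * P \<one> * A) = 1 \<cdot>\<^sub>m (Ai * P \<one> * A)"
      using \<mu>eq[OF one_T] Q1 one_smult_m by simp
    then show ?thesis using smult_cancel[OF Mc[OF one_T] Mnz[OF one_T]] by blast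
  qed
  have \<mu>nz: "\<mu> y \<noteq> 0" if y: "y \<in> T" for y
  proof
    assume z: "\<mu> y = 0"
    have "map_mat \<sigma> (P (ch y)) = 0\<^sub>m d d" using \<mu>eq[OF y] z zero_smult_m[OF Mc[OF y]] unfolding Q_def by simp
    then have "P (ch y) = 0\<^sub>m d d" using map_zero_gal[OF sG Pc[OF chT[OF y]] qP[OF chT[OF y]]] by blast
    then show False using Pnz[OF chT[OF y]] by simp
  qed
  have \<mu>N: "\<mu> (n \<otimes> y) = \<mu> y" if y: "y \<in> T" and n: "n \<in> N" for y n
  proof -
    have ny: "n \<otimes> y \<in> T" using NT n y .
    have "Q (n \<otimes> y) = (Ai * P n * A) * (\<mu> y \<cdot>\<^sub>m (Ai * P y * A))" using QNT[OF n y] QN[OF n] \<mu>eq[OF y] by simp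
    also have "\<dots> = \<mu> y \<cdot>\<^sub>m (Ai * (P n * P y) * A)"
      using Ac Aic PcN[OF n] Pc[OF y] AAi
      by (simp add: mult_smult_distrib[of _ d d _ d] assoc_mult_mat[of _ d d _ d _ d] inv_cancel_left)
    also have "P n * P y = P (n \<otimes> y)" using PNg[OF n y] by simp
    finally have "\<mu> (n \<otimes> y) \<cdot>\<^sub>m (Ai * P (n \<otimes> y) * A) = \<mu> y \<cdot>\<^sub>m (Ai * P (n \<otimes> y) * A)"
      using \<mu>eq[OF ny] Ac Aic Pc[OF ny] by (simp add: assoc_mult_mat[of _ d d _ d _ d])
    then show ?thesis using smult_cancel[OF Mc[OF ny] Mnz[OF ny]] by blast
  qed
  have "is_mu G K N \<theta> P h \<sigma> \<mu>"
    unfolding is_mu_unfold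
  proof (intro conjI)
    show "\<forall>y. y \<notin> T \<longrightarrow> \<mu> y = 0" unfolding \<mu>_def by simp
    show "\<forall>y\<in>T. \<mu> y \<noteq> 0" using \<mu>nz by blast
    show "\<forall>y\<in>T. \<forall>n\<in>N. \<mu> (n \<otimes> y) = \<mu> y" using \<mu>N by blast
    show "\<mu> \<one> = 1" by (rule \<mu>1)
    show "\<exists>M Mi. M \<in> carrier_mat d d \<and> Mi \<in> carrier_mat d d \<and> M * Mi = 1\<^sub>m d \<and> Mi * M = 1\<^sub>m d \<and>
        (\<forall>y\<in>T. map_mat \<sigma> (P (h \<otimes> y \<otimes> inv h)) = \<mu> y \<cdot>\<^sub>m (Mi * P y * M))"
      using Ac Aic AAi AiA \<mu>eq unfolding Q_def ch_def by blast
  qed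
  then show ?thesis by blast
qed

lemma mu_char:
  assumes hs: "(h, \<sigma>) \<in> pstab G p K N \<theta>"
  shows "is_mu G K N \<theta> P h \<sigma> (mu G K N \<theta> P h \<sigma>)"
    and "\<And>\<mu>. is_mu G K N \<theta> P h \<sigma> \<mu> \<Longrightarrow> \<mu> = mu G K N \<theta> P h \<sigma>"
proof -
  obtain \<mu> where m: "is_mu G K N \<theta> P h \<sigma> \<mu>" using mu_exists[OF hs] by blast
  have "mu G K N \<theta> P h \<sigma> = \<mu>" unfolding mu_def
    by (rule the_equality) (use mu_unique m in blast)+
  then show "is_mu G K N \<theta> P h \<sigma> (mu G K N \<theta> P h \<sigma>)" using m by simp
  fix \<mu>' assume "is_mu G K N \<theta> P h \<sigma> \<mu>'"
  then show "\<mu>' = mu G K N \<theta> P h \<sigma>" using mu_unique m \<open>mu G K N \<theta> P h \<sigma> = \<mu>\<close> by blast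
qed

end



definition rep :: "'a set \<Rightarrow> 'a" where "rep X = (SOME x. x \<in> X)"

lemma qfun_rep: "qfun f X = f (rep X)" unfolding qfun_def rep_def ..

context normal
begin

lemma cos_self: "a \<in> carrier G \<Longrightarrow> a \<in> H #> a"
  using rcos_self[OF _ subgroup_axioms] .

lemma cos_elem: "x \<in> H #> a \<Longrightarrow> \<exists>h\<in>H. x = h \<otimes> a"
  unfolding r_coset_def by auto

lemma rep_in: "a \<in> carrier G \<Longrightarrow> rep (H #> a) \<in> H #> a"
  unfolding rep_def using cos_self by (metis someI_ex)

lemma rep_cos: "a \<in> carrier G \<Longrightarrow> \<exists>h\<in>H. rep (H #> a) = h \<otimes> a"
  using rep_in cos_elem by blast

lemma Hc: "h \<in> H \<Longrightarrow> h \<in> carrier G" using subset by blast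

lemma rep_carrier: "a \<in> carrier G \<Longrightarrow> rep (H #> a) \<in> carrier G"
  using rep_cos Hc by (metis m_closed)

lemma cos_rep: "a \<in> carrier G \<Longrightarrow> H #> rep (H #> a) = H #> a"
  using repr_independence[OF rep_in _ subgroup_axioms] by simp

lemma cos_mult: "a \<in> carrier G \<Longrightarrow> b \<in> carrier G \<Longrightarrow> (H #> a) \<otimes>\<^bsub>G Mod H\<^esub> (H #> b) = H #> (a \<otimes> b)"
  by (simp add: rcos_sum)

lemma cos_carrier: "a \<in> carrier G \<Longrightarrow> H #> a \<in> carrier (G Mod H)"
  by (simp add: carrier_FactGroup)

lemma cos_inv: "a \<in> carrier G \<Longrightarrow> inv\<^bsub>G Mod H\<^esub> (H #> a) = H #> inv a"
  by (simp add: inv_FactGroup cos_carrier rcos_inv)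

lemma cos_one: "\<one>\<^bsub>G Mod H\<^esub> = H #> \<one>"
  using coset_mult_one[OF subset] by simp

lemma carrier_Mod_qimg: "carrier (G Mod H) = qimg G H (carrier G)"
  unfolding carrier_FactGroup qimg_def ..

lemma cos_eq: "a \<in> carrier G \<Longrightarrow> H #> a = H #> b \<Longrightarrow> \<exists>h\<in>H. a = h \<otimes> b"
  using cos_self cos_elem by blast

lemma sat_mem:
  assumes sat: "\<And>h s. h \<in> H \<Longrightarrow> s \<in> S \<Longrightarrow> h \<otimes> s \<in> S" and a: "a \<in> carrier G"
    and X: "H #> a \<in> qimg G H S"
  shows "a \<in> S"
proof -
  obtain s where s: "s \<in> S" and e: "H #> a = H #> s" using X unfolding qimg_def by auto
  obtain h where "h \<in> H" "a = h \<otimes> s" using cos_eq[OF a e] by blast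
  then show ?thesis using sat s by simp
qed

lemma rep_sat:
  assumes sat: "\<And>h s. h \<in> H \<Longrightarrow> s \<in> S \<Longrightarrow> h \<otimes> s \<in> S" and S: "S \<subseteq> carrier G"
    and X: "X \<in> qimg G H S"
  shows "rep X \<in> S" "H #> rep X = X"
proof -
  obtain s where s: "s \<in> S" and e: "X = H #> s" using X unfolding qimg_def by auto
  have sc: "s \<in> carrier G" using S s by blast
  obtain h where "h \<in> H" "rep X = h \<otimes> s" using rep_cos[OF sc] e by blast
  then show "rep X \<in> S" using sat s by simp
  show "H #> rep X = X" using cos_rep[OF sc] e by simp
qed

lemma qimg_mem: "s \<in> S \<Longrightarrow> H #> s \<in> qimg G H S"
  unfolding qimg_def by simp

lemma cos_hom: "group_hom G (G Mod H) (\<lambda>a. H #> a)"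
  unfolding group_hom_def group_hom_axioms_def using is_group factorgroup_is_group r_coset_hom_Mod by blast

lemma qimg_subgroup: "subgroup S G \<Longrightarrow> subgroup (qimg G H S) (G Mod H)"
  unfolding qimg_def using group_hom.subgroup_img_is_subgroup[OF cos_hom] by blast

lemma qimg_mono: "S \<subseteq> S' \<Longrightarrow> qimg G H S \<subseteq> qimg G H S'"
  unfolding qimg_def by auto

end

locale quot_setting = mu_setting +
  fixes L :: "'a set"
  assumes Lnor: "L \<lhd> G" and LN: "L \<subseteq> N" and PL: "\<And>l. l \<in> L \<Longrightarrow> P l = 1\<^sub>m d"
    and Lcomm: "\<And>l n. l \<in> L \<Longrightarrow> n \<in> N \<Longrightarrow> l \<otimes> n = n \<otimes> l"
begin

abbreviation "Q \<equiv> G Mod L"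

lemma Lc: "l \<in> L \<Longrightarrow> l \<in> carrier G" using LN Nc by blast

lemma X0L: assumes l: "l \<in> L" shows "X0 l = 1\<^sub>m d"
proof -
  obtain T1 T1i where t: "T1 \<in> carrier_mat d d" "T1i \<in> carrier_mat d d" "T1 * T1i = 1\<^sub>m d" "T1i * T1 = 1\<^sub>m d"
    "\<And>n. n \<in> N \<Longrightarrow> T1 * X0 n = P n * T1" using T1ex by blast
  have lN: "l \<in> N" using LN l by blast
  have X0c: "X0 l \<in> carrier_mat d d" using X0rep lN unfolding is_rep_def by auto
  have "X0 l = T1i * P l * T1" using conj_swap(2)[OF t(1-4) X0c PcN[OF lN] t(5)[OF lN]] .
  then show ?thesis using PL[OF l] t by simp
qed

lemma P_sat: "l \<in> L \<Longrightarrow> y \<in> T \<Longrightarrow> P (l \<otimes> y) = P y"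
  using PNg[of l y] PL[of l] LN Pc[of y] by auto

lemma X0_sat: assumes l: "l \<in> L" and n: "n \<in> N" shows "X0 (l \<otimes> n) = X0 n"
proof -
  have lN: "l \<in> N" using LN l by blast
  have "X0 (l \<otimes> n) = X0 l * X0 n" using X0rep lN n unfolding is_rep_def by blast
  moreover have "X0 n \<in> carrier_mat d d" using X0rep n unfolding is_rep_def by blast
  ultimately show ?thesis using X0L[OF l] by simp
qed

lemma th_sat: "l \<in> L \<Longrightarrow> n \<in> N \<Longrightarrow> \<theta> (l \<otimes> n) = \<theta> n"
  using thX X0_sat LN Nmult by (metis subsetD)

lemma N_sat: "l \<in> L \<Longrightarrow> n \<in> N \<Longrightarrow> l \<otimes> n \<in> N" using Nmult LN by blast
lemma K_sat: "l \<in> L \<Longrightarrow> n \<in> K \<Longrightarrow> l \<otimes> n \<in> K" using Kmult LN NsubK by blast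
lemma T_sat: "l \<in> L \<Longrightarrow> n \<in> T \<Longrightarrow> l \<otimes> n \<in> T" using NT LN by blast
lemma Tc: "y \<in> T \<Longrightarrow> y \<in> carrier G" using TK Kc by blast

lemma Ksub: "K \<subseteq> carrier G" using Kc by blast
lemma Nsubc: "N \<subseteq> carrier G" using Nc by blast
lemma Tsub: "T \<subseteq> carrier G" using Tc by blast

lemma rep_N: "X \<in> qimg G L N \<Longrightarrow> rep X \<in> N" "X \<in> qimg G L N \<Longrightarrow> L #> rep X = X"
  using normal.rep_sat[OF Lnor N_sat Nsubc] by auto
lemma rep_K: "X \<in> qimg G L K \<Longrightarrow> rep X \<in> K" "X \<in> qimg G L K \<Longrightarrow> L #> rep X = X"
  using normal.rep_sat[OF Lnor K_sat Ksub] by auto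
lemma rep_T: "X \<in> qimg G L T \<Longrightarrow> rep X \<in> T" "X \<in> qimg G L T \<Longrightarrow> L #> rep X = X"
  using normal.rep_sat[OF Lnor T_sat Tsub] by auto

lemma qth: "n \<in> N \<Longrightarrow> qfun \<theta> (L #> n) = \<theta> n"
  unfolding qfun_rep using normal.rep_cos[OF Lnor Nc] th_sat by metis

lemma qPr: "y \<in> T \<Longrightarrow> P (rep (L #> y)) = P y"
  using normal.rep_cos[OF Lnor Tc] P_sat by metis

lemma qX0: "n \<in> N \<Longrightarrow> X0 (rep (L #> n)) = X0 n"
  using normal.rep_cos[OF Lnor Nc] X0_sat by metis

lemma cmult: "x \<in> carrier G \<Longrightarrow> y \<in> carrier G \<Longrightarrow> (L #> x) \<otimes>\<^bsub>Q\<^esub> (L #> y) = L #> (x \<otimes> y)"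
  using normal.cos_mult[OF Lnor] .
lemma cinv: "x \<in> carrier G \<Longrightarrow> inv\<^bsub>Q\<^esub> (L #> x) = L #> inv x"
  using normal.cos_inv[OF Lnor] .
lemma cconj: "x \<in> carrier G \<Longrightarrow> y \<in> carrier G \<Longrightarrow>
    (L #> x) \<otimes>\<^bsub>Q\<^esub> (L #> y) \<otimes>\<^bsub>Q\<^esub> inv\<^bsub>Q\<^esub> (L #> x) = L #> (x \<otimes> y \<otimes> inv x)"
proof -
  assume x: "x \<in> carrier G" and y: "y \<in> carrier G"
  have 1: "(L #> x) \<otimes>\<^bsub>Q\<^esub> (L #> y) = L #> (x \<otimes> y)" by (rule cmult[OF x y])
  show ?thesis unfolding 1 cinv[OF x] by (rule cmult) (use x y in auto)
qed

lemma Qgroup: "group Q" using normal.factorgroup_is_group[OF Lnor] .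
lemma Qfin: "finite (carrier Q)" unfolding carrier_FactGroup using fin by simp

lemma qK_sub: "subgroup (qimg G L K) Q" using normal.qimg_subgroup[OF Lnor K] .
lemma qN_sub: "subgroup (qimg G L N) Q" using normal.qimg_subgroup[OF Lnor Nsub] .

lemma qnormal: "normal_in Q (qimg G L K) (qimg G L N)"
  unfolding normal_in_def
proof (intro conjI ballI)
  show "subgroup (qimg G L N) Q" by (rule qN_sub)
  show "qimg G L N \<subseteq> qimg G L K" using normal.qimg_mono[OF Lnor NsubK] .
  fix X Y assume X: "X \<in> qimg G L K" and Y: "Y \<in> qimg G L N"
  obtain x where x: "x \<in> K" and Xe: "X = L #> x" using X unfolding qimg_def by auto
  obtain n where n: "n \<in> N" and Ye: "Y = L #> n" using Y unfolding qimg_def by auto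
  show "X \<otimes>\<^bsub>Q\<^esub> Y \<otimes>\<^bsub>Q\<^esub> inv\<^bsub>Q\<^esub> X \<in> qimg G L N"
    unfolding Xe Ye using cconj[OF Kc[OF x] Nc[OF n]] nconj[OF x n] normal.qimg_mem[OF Lnor] by simp
qed

lemma inertia_quot: "inertia Q (qimg G L K) (qimg G L N) (qfun \<theta>) = qimg G L T"
proof (rule equalityI; rule subsetI)
  fix X assume X: "X \<in> inertia Q (qimg G L K) (qimg G L N) (qfun \<theta>)"
  then have XK: "X \<in> qimg G L K" and c: "\<And>Y. Y \<in> qimg G L N \<Longrightarrow>
     qfun \<theta> (X \<otimes>\<^bsub>Q\<^esub> Y \<otimes>\<^bsub>Q\<^esub> inv\<^bsub>Q\<^esub> X) = qfun \<theta> Y" unfolding inertia_def by auto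
  obtain x where x: "x \<in> K" and Xe: "X = L #> x" using XK unfolding qimg_def by auto
  have "\<theta> (x \<otimes> n \<otimes> inv x) = \<theta> n" if n: "n \<in> N" for n
    using c[OF normal.qimg_mem[OF Lnor n]] unfolding Xe cconj[OF Kc[OF x] Nc[OF n]]
    using qth[OF nconj[OF x n]] qth[OF n] by simp
  then have "x \<in> T" unfolding inertia_def using x by auto
  then show "X \<in> qimg G L T" unfolding Xe by (rule normal.qimg_mem[OF Lnor])
next
  fix X assume X: "X \<in> qimg G L T"
  obtain x where x: "x \<in> T" and Xe: "X = L #> x" using X unfolding qimg_def by auto
  have xK: "x \<in> K" using TK x .
  show "X \<in> inertia Q (qimg G L K) (qimg G L N) (qfun \<theta>)"
    unfolding inertia_def
  proof (intro CollectI conjI ballI)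
    show "X \<in> qimg G L K" unfolding Xe using normal.qimg_mem[OF Lnor xK] .
    fix Y assume Y: "Y \<in> qimg G L N"
    obtain n where n: "n \<in> N" and Ye: "Y = L #> n" using Y unfolding qimg_def by auto
    have "\<theta> (x \<otimes> n \<otimes> inv x) = \<theta> n" using x n unfolding inertia_def by auto
    then show "qfun \<theta> (X \<otimes>\<^bsub>Q\<^esub> Y \<otimes>\<^bsub>Q\<^esub> inv\<^bsub>Q\<^esub> X) = qfun \<theta> Y"
      unfolding Xe Ye cconj[OF Kc[OF xK] Nc[OF n]] using qth[OF nconj[OF xK n]] qth[OF n] by simp
  qed
qed


lemma T_mult: assumes x: "x \<in> T" and y: "y \<in> T" shows "x \<otimes> y \<in> T"
proof -
  have xK: "x \<in> K" and yK: "y \<in> K" using TK x y by auto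
  have "\<theta> (x \<otimes> y \<otimes> n \<otimes> inv (x \<otimes> y)) = \<theta> n" if n: "n \<in> N" for n
  proof -
    have e: "x \<otimes> y \<otimes> n \<otimes> inv (x \<otimes> y) = x \<otimes> (y \<otimes> n \<otimes> inv y) \<otimes> inv x"
      using Kc[OF xK] Kc[OF yK] Nc[OF n] by (simp add: gsimps)
    have yn: "y \<otimes> n \<otimes> inv y \<in> N" using nconj yK n .
    show ?thesis unfolding e using x y n yn unfolding inertia_def by auto
  qed
  then show ?thesis unfolding inertia_def using Kmult xK yK by auto
qed

definition "Pq X = P (rep X)"
definition "\<alpha>q X Y = \<alpha> (rep X) (rep Y)"
definition "X0q X = X0 (rep X)"

lemma qprod: "X \<in> qimg G L S \<Longrightarrow> Y \<in> qimg G L S' \<Longrightarrow> S \<subseteq> carrier G \<Longrightarrow> S' \<subseteq> carrier G \<Longrightarrow>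
   (\<And>l s. l \<in> L \<Longrightarrow> s \<in> S \<Longrightarrow> l \<otimes> s \<in> S) \<Longrightarrow> (\<And>l s. l \<in> L \<Longrightarrow> s \<in> S' \<Longrightarrow> l \<otimes> s \<in> S') \<Longrightarrow>
   X \<otimes>\<^bsub>Q\<^esub> Y = L #> (rep X \<otimes> rep Y)"
proof -
  assume X: "X \<in> qimg G L S" and Y: "Y \<in> qimg G L S'" and S: "S \<subseteq> carrier G" and S': "S' \<subseteq> carrier G"
    and sat: "\<And>l s. l \<in> L \<Longrightarrow> s \<in> S \<Longrightarrow> l \<otimes> s \<in> S" and sat': "\<And>l s. l \<in> L \<Longrightarrow> s \<in> S' \<Longrightarrow> l \<otimes> s \<in> S'"
  have rx: "rep X \<in> S" "L #> rep X = X" using normal.rep_sat[OF Lnor sat S X] by auto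
  have ry: "rep Y \<in> S'" "L #> rep Y = Y" using normal.rep_sat[OF Lnor sat' S' Y] by auto
  have "X \<otimes>\<^bsub>Q\<^esub> Y = (L #> rep X) \<otimes>\<^bsub>Q\<^esub> (L #> rep Y)" using rx ry by simp
  also have "\<dots> = L #> (rep X \<otimes> rep Y)" using cmult rx ry S S' by blast
  finally show ?thesis .
qed

lemma qone: "\<one>\<^bsub>Q\<^esub> = L #> \<one>" using normal.cos_one[OF Lnor] .

lemma X0q_irr: "irr_rep Q (qimg G L N) d X0q"
proof -
  have X0c: "\<And>n. n \<in> N \<Longrightarrow> X0 n \<in> carrier_mat d d" using X0rep unfolding is_rep_def by auto
  have rep: "is_rep Q (qimg G L N) d X0q"
    unfolding is_rep_def
  proof (intro conjI ballI)
    fix k assume "k \<in> qimg G L N" then show "X0q k \<in> carrier_mat d d" unfolding X0q_def using rep_N X0c by blast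
  next
    show "X0q \<one>\<^bsub>Q\<^esub> = 1\<^sub>m d" unfolding X0q_def qone using qX0[OF N1] X0rep unfolding is_rep_def by simp
  next
    fix x y assume x: "x \<in> qimg G L N" and y: "y \<in> qimg G L N"
    have "X0q (x \<otimes>\<^bsub>Q\<^esub> y) = X0 (rep x \<otimes> rep y)"
      unfolding X0q_def using qprod[OF x y Nsubc Nsubc N_sat N_sat] qX0[OF Nmult[OF rep_N(1)[OF x] rep_N(1)[OF y]]] by simp
    then show "X0q (x \<otimes>\<^bsub>Q\<^esub> y) = X0q x * X0q y" unfolding X0q_def using X0rep rep_N x y unfolding is_rep_def by simp
  qed
  show ?thesis unfolding irr_rep_def
  proof (intro conjI rep d_pos notI)
    assume "\<exists>W. W \<subseteq> carrier_vec d \<and> 0\<^sub>v d \<in> W \<and> (\<forall>v\<in>W. \<forall>w\<in>W. v + w \<in> W) \<and>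
           (\<forall>c. \<forall>v\<in>W. c \<cdot>\<^sub>v v \<in> W) \<and> W \<noteq> {0\<^sub>v d} \<and> W \<noteq> carrier_vec d \<and>
           (\<forall>k\<in>qimg G L N. \<forall>w\<in>W. X0q k *\<^sub>v w \<in> W)"
    then obtain W where W: "W \<subseteq> carrier_vec d" "0\<^sub>v d \<in> W" "\<forall>v\<in>W. \<forall>w\<in>W. v + w \<in> W"
           "\<forall>c. \<forall>v\<in>W. c \<cdot>\<^sub>v v \<in> W" "W \<noteq> {0\<^sub>v d}" "W \<noteq> carrier_vec d"
           and inv: "\<forall>k\<in>qimg G L N. \<forall>w\<in>W. X0q k *\<^sub>v w \<in> W" by blast
    have "\<forall>k\<in>N. \<forall>w\<in>W. X0 k *\<^sub>v w \<in> W"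
    proof (intro ballI)
      fix k w assume k: "k \<in> N" and w: "w \<in> W"
      have "X0q (L #> k) *\<^sub>v w \<in> W" using inv normal.qimg_mem[OF Lnor k] w by blast
      then show "X0 k *\<^sub>v w \<in> W" unfolding X0q_def qX0[OF k] .
    qed
    then show False using irr W unfolding irr_rep_def by blast
  qed
qed

lemma X0q_tr: "Z \<in> qimg G L N \<Longrightarrow> qfun \<theta> Z = mtrace (X0q Z)"
  unfolding X0q_def qfun_rep using rep_N thX by blast

lemma assoc_q: "assoc_proj Q (qimg G L T) (qimg G L N) (qfun \<theta>) d Pq \<alpha>q"
  unfolding assoc_proj_def
proof (intro conjI)
  have Tsat: "\<And>l s. l \<in> L \<Longrightarrow> s \<in> T \<Longrightarrow> l \<otimes> s \<in> T" using T_sat .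
  show "proj_rep Q (qimg G L T) d Pq \<alpha>q"
    unfolding proj_rep_def
  proof (intro conjI ballI)
    fix x assume x: "x \<in> qimg G L T"
    show "Pq x \<in> carrier_mat d d" "invertible_mat (Pq x)" unfolding Pq_def using rep_T(1)[OF x] Pc Pinvt by auto
  next
    fix x y assume x: "x \<in> qimg G L T" and y: "y \<in> qimg G L T"
    show "\<alpha>q x y \<noteq> 0" unfolding \<alpha>q_def using Pproj rep_T(1)[OF x] rep_T(1)[OF y] unfolding proj_rep_def by blast
    have "Pq (x \<otimes>\<^bsub>Q\<^esub> y) = P (rep x \<otimes> rep y)"
      unfolding Pq_def using qprod[OF x y Tsub Tsub Tsat Tsat] qPr[OF T_mult[OF rep_T(1)[OF x] rep_T(1)[OF y]]] by simp
    then show "Pq x * Pq y = \<alpha>q x y \<cdot>\<^sub>m Pq (x \<otimes>\<^bsub>Q\<^esub> y)"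
      unfolding Pq_def \<alpha>q_def using Pproj rep_T(1)[OF x] rep_T(1)[OF y] unfolding proj_rep_def by simp
  qed
  show "is_rep Q (qimg G L N) d Pq"
    unfolding is_rep_def
  proof (intro conjI ballI)
    fix k assume "k \<in> qimg G L N" then show "Pq k \<in> carrier_mat d d" unfolding Pq_def using rep_N PcN by blast
  next
    show "Pq \<one>\<^bsub>Q\<^esub> = 1\<^sub>m d" unfolding Pq_def qone using qPr[OF one_T] P1 by simp
  next
    fix x y assume x: "x \<in> qimg G L N" and y: "y \<in> qimg G L N"
    have "Pq (x \<otimes>\<^bsub>Q\<^esub> y) = P (rep x \<otimes> rep y)"
      unfolding Pq_def using qprod[OF x y Nsubc Nsubc N_sat N_sat] qPr[OF N_T[OF Nmult[OF rep_N(1)[OF x] rep_N(1)[OF y]]]] by simp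
    then show "Pq (x \<otimes>\<^bsub>Q\<^esub> y) = Pq x * Pq y" unfolding Pq_def using PmN rep_N x y by simp
  qed
  show "\<forall>n\<in>qimg G L N. qfun \<theta> n = mtrace (Pq n)"
    unfolding Pq_def qfun_rep using rep_N Pthe by blast
  show "\<forall>n\<in>qimg G L N. \<forall>g\<in>qimg G L T. Pq (n \<otimes>\<^bsub>Q\<^esub> g) = Pq n * Pq g \<and> Pq (g \<otimes>\<^bsub>Q\<^esub> n) = Pq g * Pq n"
  proof (intro ballI conjI)
    fix n g assume n: "n \<in> qimg G L N" and g: "g \<in> qimg G L T"
    have rn: "rep n \<in> N" and rg: "rep g \<in> T" using rep_N(1)[OF n] rep_T(1)[OF g] .
    have "Pq (n \<otimes>\<^bsub>Q\<^esub> g) = P (rep n \<otimes> rep g)"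
      unfolding Pq_def using qprod[OF n g Nsubc Tsub N_sat Tsat] qPr NT[OF rn rg] by simp
    then show "Pq (n \<otimes>\<^bsub>Q\<^esub> g) = Pq n * Pq g" unfolding Pq_def using PNg[OF rn rg] by simp
    have "Pq (g \<otimes>\<^bsub>Q\<^esub> n) = P (rep g \<otimes> rep n)"
      unfolding Pq_def using qprod[OF g n Tsub Nsubc Tsat N_sat] qPr T_mult[OF rg N_T[OF rn]] by simp
    then show "Pq (g \<otimes>\<^bsub>Q\<^esub> n) = Pq g * Pq n" unfolding Pq_def using PNg[OF rn rg] by simp
  qed
qed

lemma qent_q: "X \<in> qimg G L T \<Longrightarrow> qent (Pq X)"
  unfolding Pq_def using rep_T(1) mu_setting.qP[OF mu_setting_axioms] by blast

lemma quot_mu_setting: "mu_setting Q (qimg G L K) (qimg G L N) (qfun \<theta>) d Pq \<alpha>q X0q"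
  unfolding mu_setting_def mu_setting_axioms_def
  using Qgroup Qfin qK_sub qnormal X0q_irr X0q_tr assoc_q qent_q inertia_quot by simp


lemma qconj_th: "x \<in> K \<Longrightarrow> n \<in> N \<Longrightarrow>
   qfun \<theta> ((L #> x) \<otimes>\<^bsub>Q\<^esub> (L #> n) \<otimes>\<^bsub>Q\<^esub> inv\<^bsub>Q\<^esub> (L #> x)) = \<theta> (x \<otimes> n \<otimes> inv x)"
  using cconj[OF Kc Nc] qth nconj by simp

lemma pstab_quot: assumes x: "x \<in> K"
  shows "(L #> x, \<sigma>) \<in> pstab Q p (qimg G L K) (qimg G L N) (qfun \<theta>) \<longleftrightarrow> (x, \<sigma>) \<in> pstab G p K N \<theta>"
proof -
  have "(\<forall>Y\<in>qimg G L N. \<sigma> (qfun \<theta> ((L #> x) \<otimes>\<^bsub>Q\<^esub> Y \<otimes>\<^bsub>Q\<^esub> inv\<^bsub>Q\<^esub> (L #> x))) = qfun \<theta> Y)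
     \<longleftrightarrow> (\<forall>n\<in>N. \<sigma> (\<theta> (x \<otimes> n \<otimes> inv x)) = \<theta> n)"
    unfolding qimg_def using qconj_th[OF x] qth by auto
  moreover have "L #> x \<in> qimg G L K" using normal.qimg_mem[OF Lnor x] .
  ultimately show ?thesis unfolding pstab_def using x by auto
qed

lemma mu_quot:
  assumes xs: "(x, \<sigma>) \<in> pstab G p K N \<theta>" and y: "y \<in> T"
  shows "mu Q (qimg G L K) (qimg G L N) (qfun \<theta>) Pq (L #> x) \<sigma> (L #> y) = mu G K N \<theta> P x \<sigma> y"
proof -
  interpret q: mu_setting Q p "qimg G L K" "qimg G L N" "qfun \<theta>" d Pq \<alpha>q X0q by (rule quot_mu_setting)
  have xK: "x \<in> K" using xs unfolding pstab_def by auto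
  have xc: "x \<in> carrier G" using Kc xK .
  have xsq: "(L #> x, \<sigma>) \<in> pstab Q p (qimg G L K) (qimg G L N) (qfun \<theta>)" using pstab_quot[OF xK] xs by simp
  define \<mu>0 where "\<mu>0 = mu G K N \<theta> P x \<sigma>"
  have m0: "is_mu G K N \<theta> P x \<sigma> \<mu>0" unfolding \<mu>0_def by (rule mu_char(1)[OF xs])
  then have m0z: "\<And>y. y \<notin> T \<Longrightarrow> \<mu>0 y = 0" and m0nz: "\<And>y. y \<in> T \<Longrightarrow> \<mu>0 y \<noteq> 0"
    and m0N: "\<And>y n. y \<in> T \<Longrightarrow> n \<in> N \<Longrightarrow> \<mu>0 (n \<otimes> y) = \<mu>0 y" and m01: "\<mu>0 \<one> = 1"
    unfolding is_mu_unfold by auto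
  obtain M Mi where MM: "M \<in> carrier_mat d d" "Mi \<in> carrier_mat d d" "M * Mi = 1\<^sub>m d" "Mi * M = 1\<^sub>m d"
    and me: "\<And>y. y \<in> T \<Longrightarrow> map_mat \<sigma> (P (x \<otimes> y \<otimes> inv x)) = \<mu>0 y \<cdot>\<^sub>m (Mi * P y * M)"
    using m0 unfolding is_mu_unfold by blast
  have m0rep: "\<mu>0 (rep (L #> w)) = \<mu>0 w" if w: "w \<in> T" for w
  proof -
    obtain l where l: "l \<in> L" and e: "rep (L #> w) = l \<otimes> w" using normal.rep_cos[OF Lnor Tc[OF w]] by blast
    show ?thesis unfolding e using m0N[OF w] LN l by blast
  qed
  define \<mu>b where "\<mu>b Y = (if Y \<in> qimg G L T then \<mu>0 (rep Y) else 0)" for Y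
  have Tsat: "\<And>l s. l \<in> L \<Longrightarrow> s \<in> T \<Longrightarrow> l \<otimes> s \<in> T" using T_sat .
  have mb: "is_mu Q (qimg G L K) (qimg G L N) (qfun \<theta>) Pq (L #> x) \<sigma> \<mu>b"
    unfolding q.is_mu_unfold inertia_quot
  proof (intro conjI ballI allI impI)
    fix Y assume "Y \<notin> qimg G L T" then show "\<mu>b Y = 0" unfolding \<mu>b_def by simp
  next
    fix Y assume "Y \<in> qimg G L T" then show "\<mu>b Y \<noteq> 0" unfolding \<mu>b_def using rep_T m0nz by simp
  next
    fix Y Z assume Y: "Y \<in> qimg G L T" and Z: "Z \<in> qimg G L N"
    have ry: "rep Y \<in> T" and rz: "rep Z \<in> N" using rep_T(1)[OF Y] rep_N(1)[OF Z] .
    have e: "Z \<otimes>\<^bsub>Q\<^esub> Y = L #> (rep Z \<otimes> rep Y)" using qprod[OF Z Y Nsubc Tsub N_sat Tsat] .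
    have zyT: "rep Z \<otimes> rep Y \<in> T" using NT[OF rz ry] .
    have "Z \<otimes>\<^bsub>Q\<^esub> Y \<in> qimg G L T" unfolding e using normal.qimg_mem[OF Lnor zyT] .
    then show "\<mu>b (Z \<otimes>\<^bsub>Q\<^esub> Y) = \<mu>b Y" unfolding \<mu>b_def using Y e m0rep[OF zyT] m0N[OF ry rz] by simp
  next
    have oT: "L #> \<one> \<in> qimg G L T" using normal.qimg_mem[OF Lnor one_T] .
    show "\<mu>b \<one>\<^bsub>Q\<^esub> = 1" unfolding \<mu>b_def qone using oT m0rep[OF one_T] m01 by simp
  next
    show "\<exists>M Mi. M \<in> carrier_mat d d \<and> Mi \<in> carrier_mat d d \<and> M * Mi = 1\<^sub>m d \<and> Mi * M = 1\<^sub>m d \<and>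
       (\<forall>Y\<in>qimg G L T. map_mat \<sigma> (Pq ((L #> x) \<otimes>\<^bsub>Q\<^esub> Y \<otimes>\<^bsub>Q\<^esub> inv\<^bsub>Q\<^esub> (L #> x))) = \<mu>b Y \<cdot>\<^sub>m (Mi * Pq Y * M))"
    proof (intro exI conjI ballI)
      fix Y assume Y: "Y \<in> qimg G L T"
      have ry: "rep Y \<in> T" and Ye: "L #> rep Y = Y" using rep_T[OF Y] by auto
      have cj: "x \<otimes> rep Y \<otimes> inv x \<in> T" using conjT[OF xs ry] .
      have "(L #> x) \<otimes>\<^bsub>Q\<^esub> Y \<otimes>\<^bsub>Q\<^esub> inv\<^bsub>Q\<^esub> (L #> x) = L #> (x \<otimes> rep Y \<otimes> inv x)"
        using cconj[OF xc Tc[OF ry]] Ye by simp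
      then have "Pq ((L #> x) \<otimes>\<^bsub>Q\<^esub> Y \<otimes>\<^bsub>Q\<^esub> inv\<^bsub>Q\<^esub> (L #> x)) = P (x \<otimes> rep Y \<otimes> inv x)"
        unfolding Pq_def using qPr[OF cj] by simp
      then show "map_mat \<sigma> (Pq ((L #> x) \<otimes>\<^bsub>Q\<^esub> Y \<otimes>\<^bsub>Q\<^esub> inv\<^bsub>Q\<^esub> (L #> x))) = \<mu>b Y \<cdot>\<^sub>m (Mi * Pq Y * M)"
        unfolding \<mu>b_def Pq_def using Y me[OF ry] by simp
    qed (use MM in auto)
  qed
  have "\<mu>b = mu Q (qimg G L K) (qimg G L N) (qfun \<theta>) Pq (L #> x) \<sigma>" using q.mu_char(2)[OF xsq mb] .
  then have "mu Q (qimg G L K) (qimg G L N) (qfun \<theta>) Pq (L #> x) \<sigma> (L #> y) = \<mu>b (L #> y)" by simp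
  also have "\<dots> = \<mu>0 y" unfolding \<mu>b_def using normal.qimg_mem[OF Lnor y] m0rep[OF y] by simp
  finally show ?thesis unfolding \<mu>0_def .
qed

lemma htriple_quot:
  assumes ht: "htriple G p K N \<theta>"
  shows "htriple Q p (qimg G L K) (qimg G L N) (qfun \<theta>)"
  unfolding htriple_def
proof (intro conjI ballI)
  show "subgroup (qimg G L K) Q" by (rule qK_sub)
  show "normal_in Q (qimg G L K) (qimg G L N)" by (rule qnormal)
  show "irr_char Q (qimg G L N) (qfun \<theta>)" unfolding irr_char_def using X0q_irr X0q_tr by blast
  fix X assume X: "X \<in> qimg G L K"
  obtain x where x: "x \<in> K" and Xe: "X = L #> x" using X unfolding qimg_def by auto
  obtain \<sigma> where s: "\<sigma> \<in> HGal p" and c: "\<And>n. n \<in> N \<Longrightarrow> \<theta> (x \<otimes> n \<otimes> inv x) = \<sigma> (\<theta> n)"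
    using ht x unfolding htriple_def by blast
  show "\<exists>\<sigma>\<in>HGal p. \<forall>n\<in>qimg G L N. qfun \<theta> (X \<otimes>\<^bsub>Q\<^esub> n \<otimes>\<^bsub>Q\<^esub> inv\<^bsub>Q\<^esub> X) = \<sigma> (qfun \<theta> n)"
  proof (intro bexI[OF _ s] ballI)
    fix Y assume "Y \<in> qimg G L N"
    then obtain n where n: "n \<in> N" and Ye: "Y = L #> n" unfolding qimg_def by auto
    show "qfun \<theta> (X \<otimes>\<^bsub>Q\<^esub> Y \<otimes>\<^bsub>Q\<^esub> inv\<^bsub>Q\<^esub> X) = \<sigma> (qfun \<theta> Y)"
      unfolding Xe Ye using qconj_th[OF x n] qth[OF n] c[OF n] by simp
  qed
qed


lemma inertia_quot_gen:
  assumes K': "subgroup K' G" and LK': "L \<subseteq> K'" and K'K: "K' \<subseteq> K"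
  shows "inertia Q (qimg G L K') (qimg G L N) (qfun \<theta>) = qimg G L (inertia G K' N \<theta>)"
proof (rule equalityI; rule subsetI)
  fix X assume X: "X \<in> inertia Q (qimg G L K') (qimg G L N) (qfun \<theta>)"
  then have XK: "X \<in> qimg G L K'" and c: "\<And>Y. Y \<in> qimg G L N \<Longrightarrow>
     qfun \<theta> (X \<otimes>\<^bsub>Q\<^esub> Y \<otimes>\<^bsub>Q\<^esub> inv\<^bsub>Q\<^esub> X) = qfun \<theta> Y" unfolding inertia_def by auto
  obtain x where x': "x \<in> K'" and Xe: "X = L #> x" using XK unfolding qimg_def by auto
  have x: "x \<in> K" using K'K x' by blast
  have "\<theta> (x \<otimes> n \<otimes> inv x) = \<theta> n" if n: "n \<in> N" for n
    using c[OF normal.qimg_mem[OF Lnor n]] unfolding Xe cconj[OF Kc[OF x] Nc[OF n]]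
    using qth[OF nconj[OF x n]] qth[OF n] by simp
  then have "x \<in> inertia G K' N \<theta>" unfolding inertia_def using x' by auto
  then show "X \<in> qimg G L (inertia G K' N \<theta>)" unfolding Xe by (rule normal.qimg_mem[OF Lnor])
next
  fix X assume X: "X \<in> qimg G L (inertia G K' N \<theta>)"
  obtain x where x: "x \<in> inertia G K' N \<theta>" and Xe: "X = L #> x" using X unfolding qimg_def by auto
  have xK': "x \<in> K'" using x unfolding inertia_def by auto
  have xK: "x \<in> K" using K'K xK' by blast
  show "X \<in> inertia Q (qimg G L K') (qimg G L N) (qfun \<theta>)"
    unfolding inertia_def
  proof (intro CollectI conjI ballI)
    show "X \<in> qimg G L K'" unfolding Xe using normal.qimg_mem[OF Lnor xK'] .
    fix Y assume Y: "Y \<in> qimg G L N"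
    obtain n where n: "n \<in> N" and Ye: "Y = L #> n" using Y unfolding qimg_def by auto
    have "\<theta> (x \<otimes> n \<otimes> inv x) = \<theta> n" using x n unfolding inertia_def by auto
    then show "qfun \<theta> (X \<otimes>\<^bsub>Q\<^esub> Y \<otimes>\<^bsub>Q\<^esub> inv\<^bsub>Q\<^esub> X) = qfun \<theta> Y"
      unfolding Xe Ye cconj[OF Kc[OF xK] Nc[OF n]] using qth[OF nconj[OF xK n]] qth[OF n] by simp
  qed
qed

lemma inertia_sat_gen:
  assumes K': "subgroup K' G" and LK': "L \<subseteq> K'" and K'K: "K' \<subseteq> K"
  shows "l \<in> L \<Longrightarrow> y \<in> inertia G K' N \<theta> \<Longrightarrow> l \<otimes> y \<in> inertia G K' N \<theta>"
proof -
  assume l: "l \<in> L" and y: "y \<in> inertia G K' N \<theta>"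
  have yK': "y \<in> K'" using y unfolding inertia_def by auto
  have "y \<in> T" using y K'K unfolding inertia_def by auto
  then have "l \<otimes> y \<in> T" using T_sat l by blast
  moreover have "l \<otimes> y \<in> K'" using subgroup.m_closed[OF K'] LK' l yK' by blast
  ultimately show ?thesis unfolding inertia_def by auto
qed

lemma pstab_quot_gen: assumes x': "x \<in> K'" and K'K: "K' \<subseteq> K"
  shows "(L #> x, \<sigma>) \<in> pstab Q p (qimg G L K') (qimg G L N) (qfun \<theta>) \<longleftrightarrow> (x, \<sigma>) \<in> pstab G p K' N \<theta>"
proof -
  have x: "x \<in> K" using x' K'K by blast
  have "(\<forall>Y\<in>qimg G L N. \<sigma> (qfun \<theta> ((L #> x) \<otimes>\<^bsub>Q\<^esub> Y \<otimes>\<^bsub>Q\<^esub> inv\<^bsub>Q\<^esub> (L #> x))) = qfun \<theta> Y)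
     \<longleftrightarrow> (\<forall>n\<in>N. \<sigma> (\<theta> (x \<otimes> n \<otimes> inv x)) = \<theta> n)"
    unfolding qimg_def using qconj_th[OF x] qth by auto
  moreover have "L #> x \<in> qimg G L K'" using normal.qimg_mem[OF Lnor x'] .
  ultimately show ?thesis unfolding pstab_def using x' by auto
qed

end



lemma id_HGal: "id \<in> HGal p"
proof -
  have "id \<in> GalQab" unfolding GalQab_def by (auto simp: bij_betw_def)
  moreover have "\<exists>f::int. \<forall>\<xi>::complex. (\<exists>n::nat. n > 0 \<and> coprime n p \<and> \<xi> ^ n = 1) \<longrightarrow>
        (id \<xi>) ^ (p ^ nat (- f)) = \<xi> ^ (p ^ nat f)" by (rule exI[of _ 0]) simp
  ultimately show ?thesis unfolding HGal_def by blast
qed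

lemma pstab_id: "y \<in> inertia G K N \<theta> \<longleftrightarrow> (y, id) \<in> pstab G p K N \<theta>"
  unfolding inertia_def pstab_def using id_HGal by auto

lemma pstab_mono: "K \<subseteq> K' \<Longrightarrow> (x, \<sigma>) \<in> pstab G p K N \<theta> \<Longrightarrow> (x, \<sigma>) \<in> pstab G p K' N \<theta>"
  unfolding pstab_def by auto

theorem lemma2p4:
  fixes G :: "'a monoid" and p :: nat
    and N H M L :: "'a set" and \<theta> \<phi> :: "'a \<Rightarrow> complex"
  assumes "prime p"
    and "group G" and "finite (carrier G)"
    and "ge_c G p N \<theta> H M \<phi>"
    and "L \<lhd> G"
    and "L \<subseteq> ker_char G N \<theta> \<inter> ker_char G M \<phi> \<inter> cent G (carrier G) N"
    and "cent (G Mod L) (carrier (G Mod L)) (qimg G L N) = qimg G L (cent G (carrier G) N)"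
  shows "ge_c (G Mod L) p (qimg G L N) (qfun \<theta>) (qimg G L H) (qimg G L M) (qfun \<phi>)"
proof -
  interpret G: group G by fact
  note Lnor = assms(5)
  have htG: "htriple G p (carrier G) N \<theta>" and htH: "htriple G p H M \<phi>"
    and NH: "carrier G = N <#>\<^bsub>G\<^esub> H" and NcapH: "N \<inter> H = M" and centH: "cent G (carrier G) N \<subseteq> H"
    and pst: "pstab G p H N \<theta> = pstab G p H M \<phi>"
    using assms(4) unfolding ge_c_def by auto
  obtain d P \<alpha> d' P' \<alpha>' where
    ap: "assoc_proj G (inertia G (carrier G) N \<theta>) N \<theta> d P \<alpha>" and
    ap': "assoc_proj G (inertia G H M \<phi>) M \<phi> d' P' \<alpha>'" and
    qa: "\<forall>x\<in>inertia G (carrier G) N \<theta>. elements_mat (P x) \<subseteq> Qab" and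
    qa': "\<forall>x\<in>inertia G H M \<phi>. elements_mat (P' x) \<subseteq> Qab" and
    ru: "\<forall>x\<in>inertia G (carrier G) N \<theta>. \<forall>y\<in>inertia G (carrier G) N \<theta>. root_of_unity (\<alpha> x y)" and
    ru': "\<forall>x\<in>inertia G H M \<phi>. \<forall>y\<in>inertia G H M \<phi>. root_of_unity (\<alpha>' x y)" and
    aeq: "\<forall>x\<in>inertia G H N \<theta>. \<forall>y\<in>inertia G H N \<theta>. \<alpha> x y = \<alpha>' x y" and
    sc: "\<forall>c\<in>cent G (carrier G) N. \<exists>s. P c = s \<cdot>\<^sub>m 1\<^sub>m d \<and> P' c = s \<cdot>\<^sub>m 1\<^sub>m d'" and
    mueq: "\<forall>h \<sigma>. (h, \<sigma>) \<in> pstab G p H N \<theta> \<longrightarrow>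
           (\<forall>y\<in>inertia G H N \<theta>. mu G (carrier G) N \<theta> P h \<sigma> y = mu G H M \<phi> P' h \<sigma> y)"
    using assms(4) unfolding ge_c_def by (elim conjE exE) (rule that; assumption)
  have NG: "normal_in G (carrier G) N" and irrT: "irr_char G N \<theta>" using htG unfolding htriple_def by auto
  have Hsub: "subgroup H G" and MH: "normal_in G H M" and irrP: "irr_char G M \<phi>" using htH unfolding htriple_def by auto
  obtain d0 X0 where X0: "irr_rep G N d0 X0" and X0t: "\<And>k. k \<in> N \<Longrightarrow> \<theta> k = mtrace (X0 k)"
    using irrT unfolding irr_char_def by blast
  obtain d0' X0' where X0': "irr_rep G M d0' X0'" and X0t': "\<And>k. k \<in> M \<Longrightarrow> \<phi> k = mtrace (X0' k)"
    using irrP unfolding irr_char_def by blast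
  have N1: "\<one>\<^bsub>G\<^esub> \<in> N" using NG unfolding normal_in_def using subgroup.one_closed by blast
  have M1: "\<one>\<^bsub>G\<^esub> \<in> M" using MH unfolding normal_in_def using subgroup.one_closed by blast
  have th1: "\<theta> \<one>\<^bsub>G\<^esub> = of_nat d" using ap N1 unfolding assoc_proj_def is_rep_def by simp
  have ph1: "\<phi> \<one>\<^bsub>G\<^esub> = of_nat d'" using ap' M1 unfolding assoc_proj_def is_rep_def by simp
  have "\<theta> \<one>\<^bsub>G\<^esub> = of_nat d0" using X0t[OF N1] X0 unfolding irr_rep_def is_rep_def by simp
  then have dd: "d0 = d" using th1 by simp
  have "\<phi> \<one>\<^bsub>G\<^esub> = of_nat d0'" using X0t'[OF M1] X0' unfolding irr_rep_def is_rep_def by simp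
  then have dd': "d0' = d'" using ph1 by simp
  interpret m1: mu_setting G p "carrier G" N \<theta> d P \<alpha> X0
    by unfold_locales (use assms(3) NG X0 dd X0t ap qa qent_elements in auto)
  interpret m2: mu_setting G p H M \<phi> d' P' \<alpha>' X0'
    by (intro mu_setting.intro mu_setting_axioms.intro assms(2)) (use assms(3) Hsub MH X0' dd' X0t' ap' qa' qent_elements in auto)
  let ?C = "cent G (carrier G) N"
  have LN: "L \<subseteq> N" using assms(6) unfolding ker_char_def by auto
  have LM: "L \<subseteq> M" using assms(6) unfolding ker_char_def by auto
  have LC: "L \<subseteq> ?C" using assms(6) by auto
  have LH: "L \<subseteq> H" using LC centH by blast
  have thL: "\<And>l. l \<in> L \<Longrightarrow> \<theta> l = \<theta> \<one>\<^bsub>G\<^esub>" using assms(6) unfolding ker_char_def by auto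
  have phL: "\<And>l. l \<in> L \<Longrightarrow> \<phi> l = \<phi> \<one>\<^bsub>G\<^esub>" using assms(6) unfolding ker_char_def by auto
  have PLs: "P l = 1\<^sub>m d \<and> P' l = 1\<^sub>m d'" if l: "l \<in> L" for l
  proof -
    obtain s where s: "P l = s \<cdot>\<^sub>m 1\<^sub>m d" "P' l = s \<cdot>\<^sub>m 1\<^sub>m d'" using sc LC l by blast
    have "\<theta> l = mtrace (P l)" using m1.Pthe LN l by blast
    then have "s * of_nat d = of_nat d" using s(1) thL[OF l] th1 mtrace_smult[of "1\<^sub>m d" d s] by simp
    then have s1: "s = 1" using m1.d_pos by simp
    show ?thesis using s s1 by (simp add: one_smult_m)
  qed
  have Lcomm: "\<And>l n. l \<in> L \<Longrightarrow> n \<in> N \<Longrightarrow> l \<otimes>\<^bsub>G\<^esub> n = n \<otimes>\<^bsub>G\<^esub> l" using LC unfolding cent_def by auto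
  have MN: "M \<subseteq> N" using NcapH by blast
  have LcommM: "\<And>l n. l \<in> L \<Longrightarrow> n \<in> M \<Longrightarrow> l \<otimes>\<^bsub>G\<^esub> n = n \<otimes>\<^bsub>G\<^esub> l" using Lcomm MN by blast
  interpret q1: quot_setting G p "carrier G" N \<theta> d P \<alpha> X0 L
    by (intro quot_setting.intro quot_setting_axioms.intro m1.mu_setting_axioms) (use Lnor LN PLs Lcomm in auto)
  interpret q2: quot_setting G p H M \<phi> d' P' \<alpha>' X0' L
    by (intro quot_setting.intro quot_setting_axioms.intro m2.mu_setting_axioms) (use Lnor LM PLs LcommM in auto)
  have cQ: "carrier (G Mod L) = qimg G L (carrier G)" using normal.carrier_Mod_qimg[OF Lnor] .
  have Nc: "N \<subseteq> carrier G" and Hc: "H \<subseteq> carrier G" using q1.Nsubc q2.Ksub by auto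
  have Lsub: "subgroup L G" using normal_imp_subgroup[OF Lnor] .
  have QG: "group (G Mod L)" using q1.Qgroup .
  have qNQ: "qimg G L N \<subseteq> carrier (G Mod L)" using cQ normal.qimg_mono[OF Lnor Nc] by simp
  have qHQ: "qimg G L H \<subseteq> carrier (G Mod L)" using cQ normal.qimg_mono[OF Lnor Hc] by simp
  have iHN_sub: "inertia G H N \<theta> \<subseteq> inertia G H M \<phi>"
  proof
    fix y assume "y \<in> inertia G H N \<theta>"
    then have "(y, id) \<in> pstab G p H N \<theta>" using pstab_id by metis
    then have "(y, id) \<in> pstab G p H M \<phi>" using pst by simp
    then show "y \<in> inertia G H M \<phi>" using pstab_id by metis
  qed
  have iHN_T: "inertia G H N \<theta> \<subseteq> inertia G (carrier G) N \<theta>" using Hc unfolding inertia_def by auto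
  have iqHN: "inertia (G Mod L) (qimg G L H) (qimg G L N) (qfun \<theta>) = qimg G L (inertia G H N \<theta>)"
    using q1.inertia_quot_gen[OF Hsub LH Hc] .
  have iqT: "inertia (G Mod L) (carrier (G Mod L)) (qimg G L N) (qfun \<theta>) = qimg G L (inertia G (carrier G) N \<theta>)"
    using q1.inertia_quot cQ by simp
  have iqT': "inertia (G Mod L) (qimg G L H) (qimg G L M) (qfun \<phi>) = qimg G L (inertia G H M \<phi>)"
    using q2.inertia_quot .
  show ?thesis unfolding ge_c_def
  proof (intro conjI)
    show "htriple (G Mod L) p (carrier (G Mod L)) (qimg G L N) (qfun \<theta>)"
      using q1.htriple_quot[OF htG] cQ by simp
    show "htriple (G Mod L) p (qimg G L H) (qimg G L M) (qfun \<phi>)"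
      using q2.htriple_quot[OF htH] .
    show "cent (G Mod L) (carrier (G Mod L)) (qimg G L N) \<subseteq> qimg G L H"
      unfolding assms(7) using normal.qimg_mono[OF Lnor centH] .
    show "carrier (G Mod L) = qimg G L N <#>\<^bsub>G Mod L\<^esub> qimg G L H"
    proof (rule equalityI; rule subsetI)
      fix X assume "X \<in> carrier (G Mod L)"
      then obtain g where g: "g \<in> carrier G" and Xe: "X = L #>\<^bsub>G\<^esub> g" unfolding cQ qimg_def by auto
      have "g \<in> N <#>\<^bsub>G\<^esub> H" using g by (simp only: NH[symmetric])
      then obtain n h where n: "n \<in> N" and h: "h \<in> H" and ge: "g = n \<otimes>\<^bsub>G\<^esub> h"
        unfolding set_mult_def by blast
      have "X = (L #>\<^bsub>G\<^esub> n) \<otimes>\<^bsub>G Mod L\<^esub> (L #>\<^bsub>G\<^esub> h)" unfolding Xe ge using q1.cmult n h Nc Hc by blast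
      then show "X \<in> qimg G L N <#>\<^bsub>G Mod L\<^esub> qimg G L H"
        unfolding set_mult_def qimg_def using n h by blast
    next
      fix X assume "X \<in> qimg G L N <#>\<^bsub>G Mod L\<^esub> qimg G L H"
      then obtain A B where A: "A \<in> qimg G L N" and B: "B \<in> qimg G L H" and Xe: "X = A \<otimes>\<^bsub>G Mod L\<^esub> B"
        unfolding set_mult_def by blast
      have Ac: "A \<in> carrier (G Mod L)" using A qNQ by blast
      have Bc: "B \<in> carrier (G Mod L)" using B qHQ by blast
      show "X \<in> carrier (G Mod L)" unfolding Xe by (rule monoid.m_closed[OF group.is_monoid[OF QG] Ac Bc])
    qed
    show "qimg G L N \<inter> qimg G L H = qimg G L M"
    proof (rule equalityI; rule subsetI)
      fix X assume X: "X \<in> qimg G L N \<inter> qimg G L H"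
      obtain n where n: "n \<in> N" and Xn: "X = L #>\<^bsub>G\<^esub> n" using X unfolding qimg_def by auto
      obtain h where h: "h \<in> H" and Xh: "X = L #>\<^bsub>G\<^esub> h" using X unfolding qimg_def by auto
      obtain l where l: "l \<in> L" and nl: "n = l \<otimes>\<^bsub>G\<^esub> h" using normal.cos_eq[OF Lnor _ ] Nc n Xn Xh by (metis subsetD)
      have "n \<in> H" unfolding nl using subgroup.m_closed[OF Hsub] LH l h by blast
      then have "n \<in> M" using n NcapH by blast
      then show "X \<in> qimg G L M" unfolding Xn by (rule normal.qimg_mem[OF Lnor])
    next
      fix X assume "X \<in> qimg G L M"
      then show "X \<in> qimg G L N \<inter> qimg G L H" using NcapH unfolding qimg_def by blast
    qed
    have pq: "(L #>\<^bsub>G\<^esub> x, \<sigma>) \<in> pstab (G Mod L) p (qimg G L H) (qimg G L N) (qfun \<theta>) \<longleftrightarrow>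
        (L #>\<^bsub>G\<^esub> x, \<sigma>) \<in> pstab (G Mod L) p (qimg G L H) (qimg G L M) (qfun \<phi>)" if x: "x \<in> H" for x \<sigma>
      using q1.pstab_quot_gen[OF x Hc, of \<sigma>] q2.pstab_quot[OF x, of \<sigma>] pst by simp
    show "pstab (G Mod L) p (qimg G L H) (qimg G L N) (qfun \<theta>) = pstab (G Mod L) p (qimg G L H) (qimg G L M) (qfun \<phi>)"
    proof -
      have key: "(X, \<sigma>) \<in> pstab (G Mod L) p (qimg G L H) (qimg G L N) (qfun \<theta>) \<longleftrightarrow>
          (X, \<sigma>) \<in> pstab (G Mod L) p (qimg G L H) (qimg G L M) (qfun \<phi>)" for X \<sigma>
      proof (cases "X \<in> qimg G L H")
        case True
        then obtain x where x: "x \<in> H" and Xe: "X = L #>\<^bsub>G\<^esub> x" unfolding qimg_def by auto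
        show ?thesis unfolding Xe using pq[OF x] .
      next
        case False
        then show ?thesis unfolding pstab_def by auto
      qed
      show ?thesis by (auto simp: key)
    qed
    have Csat: "l \<otimes>\<^bsub>G\<^esub> c \<in> ?C" if l: "l \<in> L" and c: "c \<in> ?C" for l c
    proof -
      have lc: "l \<in> carrier G" using q1.Lc l .
      have cc: "c \<in> carrier G" using c unfolding cent_def by auto
      have "(l \<otimes>\<^bsub>G\<^esub> c) \<otimes>\<^bsub>G\<^esub> n = n \<otimes>\<^bsub>G\<^esub> (l \<otimes>\<^bsub>G\<^esub> c)" if n: "n \<in> N" for n
      proof -
        have nc: "n \<in> carrier G" using Nc n by blast
        have "(l \<otimes>\<^bsub>G\<^esub> c) \<otimes>\<^bsub>G\<^esub> n = l \<otimes>\<^bsub>G\<^esub> (c \<otimes>\<^bsub>G\<^esub> n)" using lc cc nc by (simp add: G.m_assoc)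
        also have "\<dots> = l \<otimes>\<^bsub>G\<^esub> (n \<otimes>\<^bsub>G\<^esub> c)" using c n unfolding cent_def by auto
        also have "\<dots> = (l \<otimes>\<^bsub>G\<^esub> n) \<otimes>\<^bsub>G\<^esub> c" using lc cc nc by (simp add: G.m_assoc)
        also have "\<dots> = (n \<otimes>\<^bsub>G\<^esub> l) \<otimes>\<^bsub>G\<^esub> c" using Lcomm[OF l n] by simp
        also have "\<dots> = n \<otimes>\<^bsub>G\<^esub> (l \<otimes>\<^bsub>G\<^esub> c)" using lc cc nc by (simp add: G.m_assoc)
        finally show ?thesis .
      qed
      then show ?thesis unfolding cent_def using lc cc by auto
    qed
    have Cc: "?C \<subseteq> carrier G" unfolding cent_def by auto
    have iHNsat: "\<And>l y. l \<in> L \<Longrightarrow> y \<in> inertia G H N \<theta> \<Longrightarrow> l \<otimes>\<^bsub>G\<^esub> y \<in> inertia G H N \<theta>"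
      using q1.inertia_sat_gen[OF Hsub LH Hc] by blast
    have iHNc: "inertia G H N \<theta> \<subseteq> carrier G" using Hc unfolding inertia_def by auto
    show "(\<exists>d P \<alpha> d' P' \<alpha>'.
        assoc_proj (G Mod L) (inertia (G Mod L) (carrier (G Mod L)) (qimg G L N) (qfun \<theta>)) (qimg G L N) (qfun \<theta>) d P \<alpha> \<and>
        assoc_proj (G Mod L) (inertia (G Mod L) (qimg G L H) (qimg G L M) (qfun \<phi>)) (qimg G L M) (qfun \<phi>) d' P' \<alpha>' \<and>
        (\<forall>x\<in>inertia (G Mod L) (carrier (G Mod L)) (qimg G L N) (qfun \<theta>). elements_mat (P x) \<subseteq> Qab) \<and>
        (\<forall>x\<in>inertia (G Mod L) (qimg G L H) (qimg G L M) (qfun \<phi>). elements_mat (P' x) \<subseteq> Qab) \<and>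
        (\<forall>x\<in>inertia (G Mod L) (carrier (G Mod L)) (qimg G L N) (qfun \<theta>). \<forall>y\<in>inertia (G Mod L) (carrier (G Mod L)) (qimg G L N) (qfun \<theta>). root_of_unity (\<alpha> x y)) \<and>
        (\<forall>x\<in>inertia (G Mod L) (qimg G L H) (qimg G L M) (qfun \<phi>). \<forall>y\<in>inertia (G Mod L) (qimg G L H) (qimg G L M) (qfun \<phi>). root_of_unity (\<alpha>' x y)) \<and>
        (\<forall>x\<in>inertia (G Mod L) (qimg G L H) (qimg G L N) (qfun \<theta>). \<forall>y\<in>inertia (G Mod L) (qimg G L H) (qimg G L N) (qfun \<theta>). \<alpha> x y = \<alpha>' x y) \<and>
        (\<forall>c\<in>cent (G Mod L) (carrier (G Mod L)) (qimg G L N). \<exists>s. P c = s \<cdot>\<^sub>m 1\<^sub>m d \<and> P' c = s \<cdot>\<^sub>m 1\<^sub>m d') \<and>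
        (\<forall>h \<sigma>. (h, \<sigma>) \<in> pstab (G Mod L) p (qimg G L H) (qimg G L N) (qfun \<theta>) \<longrightarrow>
           (\<forall>y\<in>inertia (G Mod L) (qimg G L H) (qimg G L N) (qfun \<theta>). mu (G Mod L) (carrier (G Mod L)) (qimg G L N) (qfun \<theta>) P h \<sigma> y = mu (G Mod L) (qimg G L H) (qimg G L M) (qfun \<phi>) P' h \<sigma> y)))"
    proof (rule exI[of _ d], rule exI[of _ q1.Pq], rule exI[of _ q1.\<alpha>q], rule exI[of _ d'],
        rule exI[of _ q2.Pq], rule exI[of _ q2.\<alpha>q], intro conjI ballI allI impI)
      show "assoc_proj (G Mod L) (inertia (G Mod L) (carrier (G Mod L)) (qimg G L N) (qfun \<theta>)) (qimg G L N) (qfun \<theta>) d q1.Pq q1.\<alpha>q"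
        unfolding iqT by (rule q1.assoc_q)
      show "assoc_proj (G Mod L) (inertia (G Mod L) (qimg G L H) (qimg G L M) (qfun \<phi>)) (qimg G L M) (qfun \<phi>) d' q2.Pq q2.\<alpha>q"
        unfolding iqT' by (rule q2.assoc_q)
    next
      fix x assume "x \<in> inertia (G Mod L) (carrier (G Mod L)) (qimg G L N) (qfun \<theta>)"
      then have "rep x \<in> inertia G (carrier G) N \<theta>" unfolding iqT by (rule q1.rep_T)
      then show "elements_mat (q1.Pq x) \<subseteq> Qab" unfolding q1.Pq_def using qa by blast
    next
      fix x assume "x \<in> inertia (G Mod L) (qimg G L H) (qimg G L M) (qfun \<phi>)"
      then have "rep x \<in> inertia G H M \<phi>" unfolding iqT' by (rule q2.rep_T)
      then show "elements_mat (q2.Pq x) \<subseteq> Qab" unfolding q2.Pq_def using qa' by blast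
    next
      fix x y assume "x \<in> inertia (G Mod L) (carrier (G Mod L)) (qimg G L N) (qfun \<theta>)"
        and "y \<in> inertia (G Mod L) (carrier (G Mod L)) (qimg G L N) (qfun \<theta>)"
      then have "rep x \<in> inertia G (carrier G) N \<theta>" "rep y \<in> inertia G (carrier G) N \<theta>"
        unfolding iqT by (auto intro: q1.rep_T)
      then show "root_of_unity (q1.\<alpha>q x y)" unfolding q1.\<alpha>q_def using ru by blast
    next
      fix x y assume "x \<in> inertia (G Mod L) (qimg G L H) (qimg G L M) (qfun \<phi>)"
        and "y \<in> inertia (G Mod L) (qimg G L H) (qimg G L M) (qfun \<phi>)"
      then have "rep x \<in> inertia G H M \<phi>" "rep y \<in> inertia G H M \<phi>"
        unfolding iqT' by (auto intro: q2.rep_T)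
      then show "root_of_unity (q2.\<alpha>q x y)" unfolding q2.\<alpha>q_def using ru' by blast
    next
      fix x y assume "x \<in> inertia (G Mod L) (qimg G L H) (qimg G L N) (qfun \<theta>)"
        and "y \<in> inertia (G Mod L) (qimg G L H) (qimg G L N) (qfun \<theta>)"
      then have "rep x \<in> inertia G H N \<theta>" "rep y \<in> inertia G H N \<theta>"
        unfolding iqHN using normal.rep_sat(1)[OF Lnor iHNsat iHNc] by auto
      then show "q1.\<alpha>q x y = q2.\<alpha>q x y" unfolding q1.\<alpha>q_def q2.\<alpha>q_def using aeq by blast
    next
      fix c assume "c \<in> cent (G Mod L) (carrier (G Mod L)) (qimg G L N)"
      then have "rep c \<in> ?C" unfolding assms(7) using normal.rep_sat(1)[OF Lnor Csat Cc] by auto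
      then show "\<exists>s. q1.Pq c = s \<cdot>\<^sub>m 1\<^sub>m d \<and> q2.Pq c = s \<cdot>\<^sub>m 1\<^sub>m d'" unfolding q1.Pq_def q2.Pq_def using sc by blast
    next
      fix X \<sigma> Y assume Xs: "(X, \<sigma>) \<in> pstab (G Mod L) p (qimg G L H) (qimg G L N) (qfun \<theta>)"
        and Y: "Y \<in> inertia (G Mod L) (qimg G L H) (qimg G L N) (qfun \<theta>)"
      have "X \<in> qimg G L H" using Xs unfolding pstab_def by auto
      then obtain x where x: "x \<in> H" and Xe: "X = L #>\<^bsub>G\<^esub> x" unfolding qimg_def by auto
      have xs: "(x, \<sigma>) \<in> pstab G p H N \<theta>" using Xs q1.pstab_quot_gen[OF x Hc] unfolding Xe by simp
      have "Y \<in> qimg G L (inertia G H N \<theta>)" using Y iqHN by simp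
      then obtain y where y: "y \<in> inertia G H N \<theta>" and Ye: "Y = L #>\<^bsub>G\<^esub> y" unfolding qimg_def by auto
      have xs1: "(x, \<sigma>) \<in> pstab G p (carrier G) N \<theta>" using pstab_mono[OF Hc xs] .
      have xs2: "(x, \<sigma>) \<in> pstab G p H M \<phi>" using xs pst by simp
      have "mu (G Mod L) (carrier (G Mod L)) (qimg G L N) (qfun \<theta>) q1.Pq X \<sigma> Y = mu G (carrier G) N \<theta> P x \<sigma> y"
        unfolding cQ Xe Ye using q1.mu_quot[OF xs1] iHN_T y by blast
      also have "\<dots> = mu G H M \<phi> P' x \<sigma> y" using mueq xs y by blast
      also have "\<dots> = mu (G Mod L) (qimg G L H) (qimg G L M) (qfun \<phi>) q2.Pq X \<sigma> Y"
        unfolding Xe Ye using q2.mu_quot[OF xs2] iHN_sub y by (metis subsetD)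
      finally show "mu (G Mod L) (carrier (G Mod L)) (qimg G L N) (qfun \<theta>) q1.Pq X \<sigma> Y =
          mu (G Mod L) (qimg G L H) (qimg G L M) (qfun \<phi>) q2.Pq X \<sigma> Y" .
    qed
  qed
qed


end
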